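(* Let $(\mathcal{E},\mathcal{L},\mathcal{B})$ be a normal labelled space and $R$ a unital commutative ring. In $L_R(\mathcal{E},\mathcal{L},\mathcal{B})$: (i) if $A\in\mathcal{B}$ is non-empty then $p_A\neq 0$; (ii) if $r\in R$, $A\in\mathcal{B}$ and $rp_A=0$, then $r=0$ or $A=\emptyset$; (iii) if $A_1,\dots,A_n\in\mathcal{B}$ are non-empty and pairwise disjoint, $r_1,\dots,r_n\in R$ and $\sum_i r_ip_{A_i}=0$, then $r_i=0$ for all $i$; (iv) if $\alpha,\beta\in\mathcal{L}^*(\mathcal{E})$, $A\in\mathcal{B}$ with $A\cap r(\alpha)\cap r(\beta)\neq\emptyset$, and $0\neq r\in R$, then $rs_\alpha p_A s_\beta^*\neq 0$.
   Context: A graph $\mathcal{E}=(\mathcal{E}^0,\mathcal{E}^1,r,s)$ consists of a set of vertices $\mathcal{E}^0$, a set of edges $\mathcal{E}^1$ and maps $r,s:\mathcal{E}^1\to\mathcal{E}^0$. A finite path is a sequence $\lambda=\lambda_1\cdots\lambda_n$ of edges with $r(\lambda_i)=s(\lambda_{i+1})$, with $s(\lambda)=s(\lambda_1)$, $r(\lambda)=r(\lambda_n)$. A labelled graph $(\mathcal{E},\mathcal{L})$ is a graph with a surjective map $\mathcal{L}:\mathcal{E}^1\to\mathcal{A}$ onto a set $\mathcal{A}$ (the alphabet), extended to paths by $\mathcal{L}(\lambda)=\mathcal{L}(\lambda_1)\cdots\mathcal{L}(\lambda_n)$. $\mathcal{L}^*(\mathcal{E})$ denotes the set of words $\mathcal{L}(\lambda)$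 for finite paths $\lambda$ of positive length, together with the empty word $\omega$; $|\alpha|$ is the length of a word. For $A\subseteq\mathcal{E}^0$ and $\alpha\in\mathcal{L}^*(\mathcal{E})$, $r(A,\alpha)=\{r(\lambda)\mid \mathcal{L}(\lambda)=\alpha,\ s(\lambda)\in A\}$ if $\alpha\neq\omega$ and $r(A,\omega)=A$; $r(\alpha)=r(\mathcal{E}^0,\alpha)$; $\mathcal{L}(A\mathcal{E}^1)=\{a\in\mathcal{A}\mid r(A,a)\neq\emptyset\}$. A labelled space $(\mathcal{E},\mathcal{L},\mathcal{B})$ is a labelled graph with a family $\mathcal{B}$ of subsets of $\mathcal{E}^0$ closed under finite intersections and finite unions, containing $r(\alpha)$ for all non-empty $\alpha\in\mathcal{L}^*(\mathcal{E})$, and with $r(A,\alpha)\in\mathcal{B}$ for all $A\in\mathcal{B}$, $\alpha\in\mathcal{L}^*(\mathcal{E})$. It is normal if additionally $r(A\cap B,\alpha)=r(A,\alpha)\cap r(B,\alpha)$ for all $A,B\in\mathcal{B}$ and non-empty $\alpha$, and $\mathcal{B}$ is closed under relative complements. A non-empty $A\in\mathcal{B}$ is regular if $0<|\mathcal{L}(B\mathcal{E}^1)|<\infty$ for every non-empty $B\in\mathcal{B}$ with $B\subseteq A$; $\mathcal{B}_{reg}$ is the set of regular sets together with $\emptyset$. For $\alpha\in\mathcal{L}^*(\mathcal{E})$, $\mathcal{B}_\alpha=\{A\in\mathcal{B}\mid A\subseteq r(\alpha)\}$. The Leavitt labelled path algebra $L_R(\mathcal{E},\mathcal{L},\mathcal{B})$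 (for a normal labelled space and a unital commutative ring $R$) is the universal $R$-algebra generated by $\{p_A\mid A\in\mathcal{B}\}\cup\{s_a,s_a^*\mid a\in\mathcal{A}\}$ subject to: (i) $p_{A\cap B}=p_Ap_B$, $p_{A\cup B}=p_A+p_B-p_{A\cap B}$, $p_\emptyset=0$; (ii) $p_As_a=s_ap_{r(A,a)}$ and $s_a^*p_A=p_{r(A,a)}s_a^*$; (iii) $s_a^*s_a=p_{r(a)}$ and $s_b^*s_a=0$ for $b\neq a$; (iv) $s_as_a^*s_a=s_a$, $s_a^*s_as_a^*=s_a^*$; (v) $p_A=\sum_{a\in\mathcal{L}(A\mathcal{E}^1)}s_ap_{r(A,a)}s_a^*$ for every $A\in\mathcal{B}_{reg}$. For $\alpha=a_1\cdots a_n$ put $s_\alpha=s_{a_1}\cdots s_{a_n}$, $s_\alpha^*=s_{a_n}^*\cdots s_{a_1}^*$, and by convention $s_\omega p_A s_\omega^*=p_A$, $s_\omega p_A s_\beta^*=p_As_\beta^*$, etc. *)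

theory Defs
  imports Main
begin

record ('v, 'e, 'a) lspace =
  verts :: "'v set"
  edges :: "'e set"
  src   :: "'e \<Rightarrow> 'v"
  rng   :: "'e \<Rightarrow> 'v"
  lab   :: "'e \<Rightarrow> 'a"
  accs  :: "'v set set"

definition alphabet :: "('v, 'e, 'a) lspace \<Rightarrow> 'a set" where
  "alphabet G = lab G ` edges G"

definition is_path :: "('v, 'e, 'a) lspace \<Rightarrow> 'e list \<Rightarrow> bool" where
  "is_path G p \<longleftrightarrow> p \<noteq> [] \<and> set p \<subseteq> edges G \<and>
     (\<forall>i. Suc i < length p \<longrightarrow> rng G (p ! i) = src G (p ! Suc i))"

definition words :: "('v, 'e, 'a) lspace \<Rightarrow> 'a list set" where
  "words G = insert [] {map (lab G) p | p. is_path G p}"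

definition rset :: "('v, 'e, 'a) lspace \<Rightarrow> 'v set \<Rightarrow> 'a list \<Rightarrow> 'v set" where
  "rset G A w = (if w = [] then A
     else {rng G (last p) | p. is_path G p \<and> map (lab G) p = w \<and> src G (hd p) \<in> A})"

definition rw :: "('v, 'e, 'a) lspace \<Rightarrow> 'a list \<Rightarrow> 'v set" where
  "rw G w = rset G (verts G) w"

definition labout :: "('v, 'e, 'a) lspace \<Rightarrow> 'v set \<Rightarrow> 'a set" where
  "labout G A = {a \<in> alphabet G. rset G A [a] \<noteq> {}}"

definition labelled_space :: "('v, 'e, 'a) lspace \<Rightarrow> bool" where
  "labelled_space G \<longleftrightarrow>
     (\<forall>e \<in> edges G. src G e \<in> verts G \<and> rng G e \<in> verts G) \<and>
     accs G \<subseteq> Pow (verts G) \<and>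
     (\<forall>A \<in> accs G. \<forall>B \<in> accs G. A \<inter> B \<in> accs G \<and> A \<union> B \<in> accs G) \<and>
     (\<forall>w \<in> words G. w \<noteq> [] \<longrightarrow> rw G w \<in> accs G) \<and>
     (\<forall>A \<in> accs G. \<forall>w \<in> words G. rset G A w \<in> accs G)"

definition normal_lspace :: "('v, 'e, 'a) lspace \<Rightarrow> bool" where
  "normal_lspace G \<longleftrightarrow> labelled_space G \<and>
     (\<forall>A \<in> accs G. \<forall>B \<in> accs G. \<forall>w \<in> words G. w \<noteq> [] \<longrightarrow>
        rset G (A \<inter> B) w = rset G A w \<inter> rset G B w) \<and>
     (\<forall>A \<in> accs G. \<forall>B \<in> accs G. A - B \<in> accs G)"

definition regular :: "('v, 'e, 'a) lspace \<Rightarrow> 'v set \<Rightarrow> bool" where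
  "regular G A \<longleftrightarrow> A \<in> accs G \<and> A \<noteq> {} \<and>
     (\<forall>B \<in> accs G. B \<noteq> {} \<and> B \<subseteq> A \<longrightarrow>
        finite (labout G B) \<and> 0 < card (labout G B))"

definition Breg :: "('v, 'e, 'a) lspace \<Rightarrow> 'v set set" where
  "Breg G = insert {} {A. regular G A}"

text \<open>Free (noncommutative polynomial) R-algebra on the generators p_A, s_a, s_a^*.
  Elements are functions from words in the generators to coefficients; the ideal below
  is generated inside the finitely supported ones.\<close>

datatype ('v, 'a) gen = GP "'v set" | GS 'a | GSt 'a

type_synonym ('v, 'a, 'r) fa = "('v, 'a) gen list \<Rightarrow> 'r"

definition fa_zero :: "('v, 'a, 'r::comm_ring_1) fa" where
  "fa_zero = (\<lambda>w. 0)"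

definition fa_add :: "('v, 'a, 'r::comm_ring_1) fa \<Rightarrow> ('v, 'a, 'r) fa \<Rightarrow> ('v, 'a, 'r) fa" where
  "fa_add f g = (\<lambda>w. f w + g w)"

definition fa_sub :: "('v, 'a, 'r::comm_ring_1) fa \<Rightarrow> ('v, 'a, 'r) fa \<Rightarrow> ('v, 'a, 'r) fa" where
  "fa_sub f g = (\<lambda>w. f w - g w)"

definition fa_smult :: "'r::comm_ring_1 \<Rightarrow> ('v, 'a, 'r) fa \<Rightarrow> ('v, 'a, 'r) fa" where
  "fa_smult c f = (\<lambda>w. c * f w)"

definition fa_mult :: "('v, 'a, 'r::comm_ring_1) fa \<Rightarrow> ('v, 'a, 'r) fa \<Rightarrow> ('v, 'a, 'r) fa" where
  "fa_mult f g = (\<lambda>w. \<Sum>i\<in>{..length w}. f (take i w) * g (drop i w))"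

definition fa_sum :: "('i \<Rightarrow> ('v, 'a, 'r::comm_ring_1) fa) \<Rightarrow> 'i set \<Rightarrow> ('v, 'a, 'r) fa" where
  "fa_sum F I = (\<lambda>w. \<Sum>i\<in>I. F i w)"

definition mono :: "'r::comm_ring_1 \<Rightarrow> ('v, 'a) gen list \<Rightarrow> ('v, 'a, 'r) fa" where
  "mono c u = (\<lambda>w. if w = u then c else 0)"

definition pA :: "'v set \<Rightarrow> ('v, 'a, 'r::comm_ring_1) fa" where
  "pA A = mono 1 [GP A]"

definition sa :: "'a \<Rightarrow> ('v, 'a, 'r::comm_ring_1) fa" where
  "sa a = mono 1 [GS a]"

definition sast :: "'a \<Rightarrow> ('v, 'a, 'r::comm_ring_1) fa" where
  "sast a = mono 1 [GSt a]"

text \<open>s_alpha and s_alpha^*; for the empty word both are the unit.\<close>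
definition sw :: "'a list \<Rightarrow> ('v, 'a, 'r::comm_ring_1) fa" where
  "sw w = mono 1 (map GS w)"

definition swst :: "'a list \<Rightarrow> ('v, 'a, 'r::comm_ring_1) fa" where
  "swst w = mono 1 (rev (map GSt w))"

definition rels :: "('v, 'e, 'a) lspace \<Rightarrow> ('v, 'a, 'r::comm_ring_1) fa set" where
  "rels G =
     {fa_sub (pA (A \<inter> B)) (fa_mult (pA A) (pA B)) | A B. A \<in> accs G \<and> B \<in> accs G} \<union>
     {fa_sub (pA (A \<union> B)) (fa_sub (fa_add (pA A) (pA B)) (pA (A \<inter> B))) | A B.
        A \<in> accs G \<and> B \<in> accs G} \<union>
     {pA {} | _::unit. {} \<in> accs G} \<union>
     {fa_sub (fa_mult (pA A) (sa a)) (fa_mult (sa a) (pA (rset G A [a]))) | A a.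
        A \<in> accs G \<and> a \<in> alphabet G} \<union>
     {fa_sub (fa_mult (sast a) (pA A)) (fa_mult (pA (rset G A [a])) (sast a)) | A a.
        A \<in> accs G \<and> a \<in> alphabet G} \<union>
     {fa_sub (fa_mult (sast a) (sa a)) (pA (rw G [a])) | a. a \<in> alphabet G} \<union>
     {fa_mult (sast b) (sa a) | a b. a \<in> alphabet G \<and> b \<in> alphabet G \<and> b \<noteq> a} \<union>
     {fa_sub (fa_mult (fa_mult (sa a) (sast a)) (sa a)) (sa a) | a. a \<in> alphabet G} \<union>
     {fa_sub (fa_mult (fa_mult (sast a) (sa a)) (sast a)) (sast a) | a. a \<in> alphabet G} \<union>
     {fa_sub (pA A) (fa_sum (\<lambda>a. fa_mult (fa_mult (sa a) (pA (rset G A [a]))) (sast a))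
                             (labout G A)) | A. A \<in> Breg G \<and> A \<in> accs G}"

inductive_set lideal :: "('v, 'e, 'a) lspace \<Rightarrow> ('v, 'a, 'r::comm_ring_1) fa set"
  for G :: "('v, 'e, 'a) lspace" where
  base: "x \<in> rels G \<Longrightarrow> x \<in> lideal G"
| zero: "fa_zero \<in> lideal G"
| add: "x \<in> lideal G \<Longrightarrow> y \<in> lideal G \<Longrightarrow> fa_add x y \<in> lideal G"
| mult: "x \<in> lideal G \<Longrightarrow> fa_mult (fa_mult (mono c u) x) (mono 1 v) \<in> lideal G"

definition zero_in_L :: "('v, 'e, 'a) lspace \<Rightarrow> ('v, 'a, 'r::comm_ring_1) fa \<Rightarrow> bool" where
  "zero_in_L G x \<longleftrightarrow> x \<in> lideal G"

end

theory Submission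
  imports Defs
begin

lemma is_path_single[simp]: "is_path G [e] \<longleftrightarrow> e \<in> edges G"
  by (simp add: is_path_def)

lemma is_path_Cons:
  assumes "p \<noteq> []"
  shows "is_path G (e # p) \<longleftrightarrow> e \<in> edges G \<and> rng G e = src G (hd p) \<and> is_path G p"
proof
  assume H: "is_path G (e # p)"
  have all: "\<forall>i. Suc i < length (e # p) \<longrightarrow> rng G ((e # p) ! i) = src G ((e # p) ! Suc i)"
    and se: "set (e # p) \<subseteq> edges G"
    using H unfolding is_path_def by simp_all
  have "rng G e = src G (hd p)" using all[rule_format, of 0] assms by (simp add: hd_conv_nth)
  moreover have "is_path G p" unfolding is_path_def
  proof (intro conjI allI impI)
    show "p \<noteq> []" by (rule assms)
    show "set p \<subseteq> edges G" using se by simp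
    fix i assume "Suc i < length p"
    then show "rng G (p ! i) = src G (p ! Suc i)" using all[rule_format, of "Suc i"] by simp
  qed
  ultimately show "e \<in> edges G \<and> rng G e = src G (hd p) \<and> is_path G p"
    using se by simp
next
  assume H: "e \<in> edges G \<and> rng G e = src G (hd p) \<and> is_path G p"
  show "is_path G (e # p)" unfolding is_path_def
  proof (intro conjI allI impI)
    show "set (e # p) \<subseteq> edges G" using H unfolding is_path_def by auto
  next
    fix i assume "Suc i < length (e # p)"
    then show "rng G ((e # p) ! i) = src G ((e # p) ! Suc i)"
      using H assms unfolding is_path_def
      by (cases i) (auto simp: hd_conv_nth)
  qed simp
qed

lemma rset_Nil[simp]: "rset G A [] = A" by (simp add: rset_def)

lemma rset_mono: "A \<subseteq> B \<Longrightarrow> rset G A w \<subseteq> rset G B w"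
  unfolding rset_def by auto

lemma rset_Un: "rset G (A \<union> B) w = rset G A w \<union> rset G B w"
  unfolding rset_def by auto

lemma rset_empty[simp]: "rset G {} w = {}"
  unfolding rset_def by auto

lemma rset_single: "rset G A [a] = {rng G e | e. e \<in> edges G \<and> lab G e = a \<and> src G e \<in> A}"
proof -
  have eq: "(is_path G p \<and> map (lab G) p = [a]) \<longleftrightarrow> (\<exists>e. p = [e] \<and> e \<in> edges G \<and> lab G e = a)" for p
  proof
    assume "is_path G p \<and> map (lab G) p = [a]"
    then show "\<exists>e. p = [e] \<and> e \<in> edges G \<and> lab G e = a"
      by (cases p) (auto simp: is_path_def)
  qed auto
  have rs: "rset G A [a] = {rng G (last p) |p. is_path G p \<and> map (lab G) p = [a] \<and> src G (hd p) \<in> A}"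
    by (simp add: rset_def)
  show ?thesis unfolding rs
  proof (intro equalityI subsetI)
    fix v assume "v \<in> {rng G (last p) |p. is_path G p \<and> map (lab G) p = [a] \<and> src G (hd p) \<in> A}"
    then obtain p where "v = rng G (last p)" "is_path G p \<and> map (lab G) p = [a]" "src G (hd p) \<in> A" by (elim CollectE exE conjE) simp
    moreover have "\<exists>e. p = [e] \<and> e \<in> edges G \<and> lab G e = a" using eq[of p] calculation by simp
    then obtain e where "p = [e]" "e \<in> edges G" "lab G e = a" by (elim exE conjE) simp
    ultimately show "v \<in> {rng G e |e. e \<in> edges G \<and> lab G e = a \<and> src G e \<in> A}" by auto
  next
    fix v assume "v \<in> {rng G e |e. e \<in> edges G \<and> lab G e = a \<and> src G e \<in> A}"
    then obtain e where "v = rng G e" "e \<in> edges G" "lab G e = a" "src G e \<in> A" by (elim CollectE exE conjE) simp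
    then show "v \<in> {rng G (last p) |p. is_path G p \<and> map (lab G) p = [a] \<and> src G (hd p) \<in> A}"
      by (intro CollectI exI[of _ "[e]"]) simp
  qed
qed

lemma rset_Cons:
  assumes "w \<noteq> []"
  shows "rset G A (a # w) = rset G (rset G A [a]) w"
proof
  show "rset G A (a # w) \<subseteq> rset G (rset G A [a]) w"
  proof
    fix v assume "v \<in> rset G A (a # w)"
    then have "v \<in> {rng G (last p) | p. is_path G p \<and> map (lab G) p = a # w \<and> src G (hd p) \<in> A}"
      by (simp add: rset_def)
    then obtain P where P: "v = rng G (last P)" "is_path G P" "map (lab G) P = a # w" "src G (hd P) \<in> A"
      by (elim CollectE exE conjE) simp
    have "P \<noteq> []" using P(3) by auto
    then obtain e q where eq: "P = e # q" by (meson neq_Nil_conv)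
    have qne: "q \<noteq> []" using P eq assms by auto
    have "e \<in> edges G" "rng G e = src G (hd q)" "is_path G q"
      using P(2) is_path_Cons[OF qne] eq by auto
    moreover have "lab G e = a" "map (lab G) q = w" using P eq by auto
    ultimately have "src G (hd q) = rng G e \<and> e \<in> edges G \<and> lab G e = a \<and> src G e \<in> A"
      using P eq by simp
    then have "src G (hd q) \<in> rset G A [a]" unfolding rset_single mem_Collect_eq by (rule exI[of _ e])
    then have "v \<in> {rng G (last p) |p. is_path G p \<and> map (lab G) p = w \<and> src G (hd p) \<in> rset G A [a]}"
      using qne P eq \<open>is_path G q\<close> \<open>map (lab G) q = w\<close>
      by (intro CollectI exI[of _ q]) simp
    then show "v \<in> rset G (rset G A [a]) w" unfolding rset_def[of G "rset G A [a]" w] using assms by simp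
  qed
next
  show "rset G (rset G A [a]) w \<subseteq> rset G A (a # w)"
  proof
    fix v assume "v \<in> rset G (rset G A [a]) w"
    then have "v \<in> {rng G (last p) | p. is_path G p \<and> map (lab G) p = w \<and> src G (hd p) \<in> rset G A [a]}"
      using assms by (simp add: rset_def)
    then obtain q where q: "v = rng G (last q)" "is_path G q" "map (lab G) q = w" "src G (hd q) \<in> rset G A [a]"
      by (elim CollectE exE conjE) simp
    then have "src G (hd q) \<in> {rng G e | e. e \<in> edges G \<and> lab G e = a \<and> src G e \<in> A}"
      unfolding rset_single by simp
    then obtain e where e: "e \<in> edges G" "lab G e = a" "src G e \<in> A" "rng G e = src G (hd q)"
      by (elim CollectE exE conjE) simp
    have qne: "q \<noteq> []" using q assms by auto
    have "is_path G (e # q)" using is_path_Cons[OF qne] e q by auto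
    then have "v \<in> {rng G (last p) |p. is_path G p \<and> map (lab G) p = a # w \<and> src G (hd p) \<in> A}"
      using q e qne by (intro CollectI exI[of _ "e # q"]) simp
    then show "v \<in> rset G A (a # w)" unfolding rset_def[of G A "a # w"] by simp
  qed
qed

lemma rset_single_ne_alphabet: "rset G A [a] \<noteq> {} \<Longrightarrow> a \<in> alphabet G"
  unfolding rset_single alphabet_def by auto

lemma single_words: "a \<in> alphabet G \<Longrightarrow> [a] \<in> words G"
proof -
  assume "a \<in> alphabet G"
  then obtain e where "e \<in> edges G" "a = lab G e" unfolding alphabet_def by auto
  then have "is_path G [e] \<and> map (lab G) [e] = [a]" by simp
  then have "[a] \<in> {map (lab G) p |p. is_path G p}" by (intro CollectI exI[of _ "[e]"]) simp
  then show ?thesis unfolding words_def by blast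
qed

lemma words_Cons:
  assumes "a # w \<in> words G" "w \<noteq> []"
  shows "w \<in> words G" "a \<in> alphabet G"
proof -
  have "a # w \<in> {map (lab G) p |p. is_path G p}" using assms(1) unfolding words_def by auto
  then obtain P where P: "is_path G P" "map (lab G) P = a # w" by (elim CollectE exE conjE) simp
  have "P \<noteq> []" using P(2) by auto
  then obtain e q where eq: "P = e # q" by (meson neq_Nil_conv)
  have qne: "q \<noteq> []" using P eq assms by auto
  show "w \<in> words G" using P eq is_path_Cons[OF qne] qne unfolding words_def by auto
  show "a \<in> alphabet G" using P eq is_path_Cons[OF qne] unfolding alphabet_def by auto
qed



definition filt :: "('v,'e,'a) lspace \<Rightarrow> 'v set set \<Rightarrow> bool" where
  "filt G F \<longleftrightarrow> F \<subseteq> accs G \<and> {} \<notin> F \<and> (\<forall>A\<in>F. \<forall>B\<in>F. A \<inter> B \<in> F) \<and>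
     (\<forall>A\<in>F. \<forall>B\<in>accs G. A \<subseteq> B \<longrightarrow> B \<in> F)"

definition ultra :: "('v,'e,'a) lspace \<Rightarrow> 'v set set \<Rightarrow> bool" where
  "ultra G F \<longleftrightarrow> filt G F \<and> (\<forall>F'. filt G F' \<and> F \<subseteq> F' \<longrightarrow> F' = F)"

definition pfilt :: "('v,'e,'a) lspace \<Rightarrow> 'v set set \<Rightarrow> bool" where
  "pfilt G F \<longleftrightarrow> F \<subseteq> accs G \<and> {} \<notin> F \<and> (\<forall>A\<in>accs G. \<forall>B\<in>accs G.
     (A \<inter> B \<in> F \<longleftrightarrow> A \<in> F \<and> B \<in> F) \<and> (A \<union> B \<in> F \<longleftrightarrow> A \<in> F \<or> B \<in> F))"

locale NL =
  fixes G :: "('v,'e,'a) lspace"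
  assumes N: "normal_lspace G"
begin

lemma LS: "labelled_space G" using N unfolding normal_lspace_def by simp

lemma edge_verts: "e \<in> edges G \<Longrightarrow> src G e \<in> verts G \<and> rng G e \<in> verts G"
  using LS unfolding labelled_space_def by blast

lemma accs_sub: "A \<in> accs G \<Longrightarrow> A \<subseteq> verts G"
  using LS unfolding labelled_space_def by blast

lemma accs_Int: "A \<in> accs G \<Longrightarrow> B \<in> accs G \<Longrightarrow> A \<inter> B \<in> accs G"
  using LS unfolding labelled_space_def by blast

lemma accs_Un: "A \<in> accs G \<Longrightarrow> B \<in> accs G \<Longrightarrow> A \<union> B \<in> accs G"
  using LS unfolding labelled_space_def by blast

lemma rw_accs: "w \<in> words G \<Longrightarrow> w \<noteq> [] \<Longrightarrow> rw G w \<in> accs G"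
  using LS unfolding labelled_space_def by blast

lemma rset_accs: "A \<in> accs G \<Longrightarrow> w \<in> words G \<Longrightarrow> rset G A w \<in> accs G"
  using LS unfolding labelled_space_def by blast

lemma rset_Int: "A \<in> accs G \<Longrightarrow> B \<in> accs G \<Longrightarrow> w \<in> words G \<Longrightarrow> w \<noteq> [] \<Longrightarrow>
   rset G (A \<inter> B) w = rset G A w \<inter> rset G B w"
proof -
  assume a: "A \<in> accs G" "B \<in> accs G" "w \<in> words G" "w \<noteq> []"
  have "\<forall>A \<in> accs G. \<forall>B \<in> accs G. \<forall>w \<in> words G. w \<noteq> [] \<longrightarrow>
        rset G (A \<inter> B) w = rset G A w \<inter> rset G B w" using N unfolding normal_lspace_def by (elim conjE)
  then show ?thesis using a by simp
qed

lemma rset_single_verts: "rset G A [a] \<subseteq> verts G"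
  unfolding rset_single using edge_verts by auto

lemma rset_sub_rw: "A \<in> accs G \<Longrightarrow> rset G A w \<subseteq> rw G w"
  unfolding rw_def using accs_sub rset_mono by blast

lemma rw_Cons_sub: "w \<noteq> [] \<Longrightarrow> rw G (a # w) \<subseteq> rw G w"
proof -
  assume w: "w \<noteq> []"
  have "rset G (rset G (verts G) [a]) w \<subseteq> rset G (verts G) w" by (rule rset_mono[OF rset_single_verts])
  then show ?thesis unfolding rw_def using rset_Cons[OF w, of G "verts G" a] by simp
qed

lemma gen_filt:
  assumes F: "filt G M" and C: "C \<in> accs G" and nx: "\<forall>X\<in>M. X \<inter> C \<noteq> {}"
  shows "filt G {Y \<in> accs G. \<exists>X\<in>M. X \<inter> C \<subseteq> Y}"
proof -
  have f1: "\<forall>A\<in>M. \<forall>B\<in>M. A \<inter> B \<in> M" using F unfolding filt_def by simp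
  show ?thesis unfolding filt_def
  proof (intro conjI ballI impI)
    show "{Y \<in> accs G. \<exists>X\<in>M. X \<inter> C \<subseteq> Y} \<subseteq> accs G" by auto
    show "{} \<notin> {Y \<in> accs G. \<exists>X\<in>M. X \<inter> C \<subseteq> Y}" using nx by auto
  next
    fix Y1 Y2 assume "Y1 \<in> {Y \<in> accs G. \<exists>X\<in>M. X \<inter> C \<subseteq> Y}" "Y2 \<in> {Y \<in> accs G. \<exists>X\<in>M. X \<inter> C \<subseteq> Y}"
    then have "Y1 \<in> accs G" "Y2 \<in> accs G" "\<exists>X\<in>M. X \<inter> C \<subseteq> Y1" "\<exists>X\<in>M. X \<inter> C \<subseteq> Y2" by simp_all
    then obtain X1 X2 where X: "X1 \<in> M" "X2 \<in> M" "X1 \<inter> C \<subseteq> Y1" "X2 \<inter> C \<subseteq> Y2" by auto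
    have "X1 \<inter> X2 \<in> M" using f1 X by simp
    moreover have "X1 \<inter> X2 \<inter> C \<subseteq> Y1 \<inter> Y2" using X by auto
    moreover have "Y1 \<inter> Y2 \<in> accs G" using accs_Int \<open>Y1 \<in> accs G\<close> \<open>Y2 \<in> accs G\<close> by simp
    ultimately show "Y1 \<inter> Y2 \<in> {Y \<in> accs G. \<exists>X\<in>M. X \<inter> C \<subseteq> Y}" by auto
  next
    fix Y1 Y2 assume "Y1 \<in> {Y \<in> accs G. \<exists>X\<in>M. X \<inter> C \<subseteq> Y}" "Y2 \<in> accs G" "Y1 \<subseteq> Y2"
    then show "Y2 \<in> {Y \<in> accs G. \<exists>X\<in>M. X \<inter> C \<subseteq> Y}" by auto
  qed
qed

lemma ultra_sep:
  assumes U: "ultra G M" and C: "C \<in> accs G" "C \<notin> M" and ne: "M \<noteq> {}"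
  shows "\<exists>X\<in>M. X \<inter> C = {}"
proof (rule ccontr)
  assume "\<not> (\<exists>X\<in>M. X \<inter> C = {})"
  then have nx: "\<forall>X\<in>M. X \<inter> C \<noteq> {}" by simp
  have F: "filt G M" using U unfolding ultra_def by simp
  define M' where "M' = {Y \<in> accs G. \<exists>X\<in>M. X \<inter> C \<subseteq> Y}"
  have fM': "filt G M'" unfolding M'_def by (rule gen_filt[OF F C(1) nx])
  have "M \<subseteq> M'"
  proof
    fix X assume "X \<in> M"
    moreover then have "X \<in> accs G" using F unfolding filt_def by auto
    ultimately show "X \<in> M'" unfolding M'_def by auto
  qed
  then have "M' = M" using U fM' unfolding ultra_def by simp
  moreover obtain X where "X \<in> M" using ne by auto
  then have "C \<in> M'" unfolding M'_def using C by auto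
  ultimately show False using C by simp
qed

lemma ultra_pfilt:
  assumes U: "ultra G M"
  shows "pfilt G M"
proof -
  have F: "filt G M" using U unfolding ultra_def by simp
  have f1: "\<forall>A\<in>M. \<forall>B\<in>M. A \<inter> B \<in> M" and f2: "\<forall>A\<in>M. \<forall>B\<in>accs G. A \<subseteq> B \<longrightarrow> B \<in> M"
    and f0: "{} \<notin> M" and f3: "M \<subseteq> accs G"
    using F unfolding filt_def by auto
  have prime: "A \<in> M \<or> B \<in> M" if AB: "A \<in> accs G" "B \<in> accs G" "A \<union> B \<in> M" for A B
  proof (rule ccontr)
    assume nAB: "\<not> (A \<in> M \<or> B \<in> M)"
    have ne: "M \<noteq> {}" using AB by auto
    obtain X where X: "X \<in> M" "X \<inter> A = {}" using ultra_sep[OF U AB(1) _ ne] nAB by auto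
    obtain Y where Y: "Y \<in> M" "Y \<inter> B = {}" using ultra_sep[OF U AB(2) _ ne] nAB by auto
    have "X \<inter> Y \<in> M" using f1 X Y by simp
    then have "X \<inter> Y \<inter> (A \<union> B) \<in> M" using f1 AB by simp
    moreover have "X \<inter> Y \<inter> (A \<union> B) = {}" using X Y by auto
    ultimately show False using f0 by simp
  qed
  show ?thesis unfolding pfilt_def
  proof (intro conjI ballI)
    show "M \<subseteq> accs G" "{} \<notin> M" using f0 f3 by auto
  next
    fix A B assume AB: "A \<in> accs G" "B \<in> accs G"
    show "(A \<inter> B \<in> M) = (A \<in> M \<and> B \<in> M)"
    proof
      assume "A \<inter> B \<in> M" then show "A \<in> M \<and> B \<in> M" using f2 AB by auto
    qed (use f1 in simp)
    show "(A \<union> B \<in> M) = (A \<in> M \<or> B \<in> M)"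
    proof
      assume "A \<union> B \<in> M" then show "A \<in> M \<or> B \<in> M" using prime AB by simp
    next
      assume "A \<in> M \<or> B \<in> M" then show "A \<union> B \<in> M" using f2 AB accs_Un by auto
    qed
  qed
qed

lemma ultra_exists:
  assumes P: "P \<subseteq> accs G" "{} \<notin> P" "\<forall>A\<in>P. \<forall>B\<in>P. A \<inter> B \<in> P"
  shows "\<exists>U. ultra G U \<and> P \<subseteq> U"
proof -
  define Fs where "Fs = {F. filt G F \<and> P \<subseteq> F}"
  define up where "up = {B \<in> accs G. \<exists>A\<in>P. A \<subseteq> B}"
  have upF: "up \<in> Fs"
  proof -
    have "filt G up" unfolding filt_def
    proof (intro conjI ballI impI)
      show "up \<subseteq> accs G" unfolding up_def by auto
      show "{} \<notin> up" using P unfolding up_def by auto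
    next
      fix X Y assume "X \<in> up" "Y \<in> up"
      then obtain A1 A2 where "X \<in> accs G" "Y \<in> accs G" "A1 \<in> P" "A2 \<in> P" "A1 \<subseteq> X" "A2 \<subseteq> Y"
        unfolding up_def by auto
      moreover have "A1 \<inter> A2 \<in> P" using P calculation by simp
      moreover have "X \<inter> Y \<in> accs G" using accs_Int calculation by simp
      moreover have sub: "A1 \<inter> A2 \<subseteq> X \<inter> Y" using calculation by auto
      ultimately show "X \<inter> Y \<in> up" unfolding up_def mem_Collect_eq
        by (intro conjI bexI[of _ "A1 \<inter> A2"]) (use sub in simp_all)
    next
      fix X Y assume "X \<in> up" "Y \<in> accs G" "X \<subseteq> Y"
      then show "Y \<in> up" unfolding up_def by auto
    qed
    moreover have "P \<subseteq> up" using P unfolding up_def by auto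
    ultimately show ?thesis unfolding Fs_def by simp
  qed
  have "\<forall>C\<in>chains Fs. \<exists>U\<in>Fs. \<forall>X\<in>C. X \<subseteq> U"
  proof
    fix C assume C: "C \<in> chains Fs"
    show "\<exists>U\<in>Fs. \<forall>X\<in>C. X \<subseteq> U"
    proof (cases "C = {}")
      case True then show ?thesis using upF by auto
    next
      case False
      have CF: "C \<subseteq> Fs" and ch: "\<forall>X\<in>C. \<forall>Y\<in>C. X \<subseteq> Y \<or> Y \<subseteq> X"
        using C unfolding chains_def chain_subset_def by auto
      have "\<Union>C \<in> Fs" unfolding Fs_def filt_def
      proof (intro CollectI conjI ballI impI)
        show "\<Union>C \<subseteq> accs G" "{} \<notin> \<Union>C" using CF unfolding Fs_def filt_def by auto
        show "P \<subseteq> \<Union>C" using CF False unfolding Fs_def by auto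
      next
        fix A B assume "A \<in> \<Union>C" "B \<in> \<Union>C"
        then obtain X Y where "X \<in> C" "Y \<in> C" "A \<in> X" "B \<in> Y" by auto
        have fl: "\<And>Z. Z \<in> C \<Longrightarrow> \<forall>A\<in>Z. \<forall>B\<in>Z. A \<inter> B \<in> Z" using CF unfolding Fs_def filt_def by auto
        show "A \<inter> B \<in> \<Union>C"
        proof (cases "X \<subseteq> Y")
          case True then show ?thesis using fl[OF \<open>Y \<in> C\<close>] \<open>A \<in> X\<close> \<open>B \<in> Y\<close> \<open>Y \<in> C\<close> by blast
        next
          case False then have "Y \<subseteq> X" using ch \<open>X \<in> C\<close> \<open>Y \<in> C\<close> by blast
          then show ?thesis using fl[OF \<open>X \<in> C\<close>] \<open>A \<in> X\<close> \<open>B \<in> Y\<close> \<open>X \<in> C\<close> by blast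
        qed
      next
        fix A B assume "A \<in> \<Union>C" "B \<in> accs G" "A \<subseteq> B"
        then show "B \<in> \<Union>C" using CF unfolding Fs_def filt_def by blast
      qed
      then show ?thesis by auto
    qed
  qed
  from Zorn_Lemma2[OF this] obtain M where M: "M \<in> Fs" "\<forall>X\<in>Fs. M \<subseteq> X \<longrightarrow> X = M" by blast
  have "ultra G M" unfolding ultra_def using M unfolding Fs_def by auto
  then show ?thesis using M unfolding Fs_def by auto
qed

lemma step:
  assumes U: "ultra G F" and R: "R \<in> F" "regular G R"
  shows "\<exists>a U'. ultra G U' \<and> F = {A \<in> accs G. rset G A [a] \<in> U'} \<and> rw G [a] \<in> U'"
proof -
  have FF: "filt G F" using U unfolding ultra_def by simp
  have f1: "\<forall>A\<in>F. \<forall>B\<in>F. A \<inter> B \<in> F" and f2: "\<forall>A\<in>F. \<forall>B\<in>accs G. A \<subseteq> B \<longrightarrow> B \<in> F"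
    and f0: "{} \<notin> F" and f3: "F \<subseteq> accs G"
    using FF unfolding filt_def by auto
  have Racc: "R \<in> accs G" and Rreg: "\<forall>B \<in> accs G. B \<noteq> {} \<and> B \<subseteq> R \<longrightarrow>
        finite (labout G B) \<and> 0 < card (labout G B)"
    using R(2) unfolding regular_def by auto
  define S where "S A = labout G (A \<inter> R)" for A
  have SF: "finite (S A) \<and> 0 < card (S A)" if "A \<in> F" for A
  proof -
    have AR: "A \<inter> R \<in> F" using f1 that R(1) by simp
    then have "A \<inter> R \<noteq> {}" "A \<inter> R \<in> accs G" using f0 f3 by auto
    then show ?thesis using Rreg unfolding S_def by simp
  qed
  define n where "n = (LEAST m. m \<in> card ` S ` F)"
  have n: "n \<in> card ` S ` F" unfolding n_def by (rule LeastI[of _ "card (S R)"]) (use R(1) in simp)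
  have nle: "n \<le> card (S A)" if "A \<in> F" for A unfolding n_def by (rule Least_le) (use that in simp)
  obtain A0 where A0: "A0 \<in> F" "card (S A0) = n" using n by auto
  obtain a where a: "a \<in> S A0" using SF[OF A0(1)] by (metis card_gt_0_iff ex_in_conv)
  have Smono: "S A \<subseteq> S B" if "A \<subseteq> B" for A B
  proof
    fix x assume "x \<in> S A"
    then have "x \<in> alphabet G" "rset G (A \<inter> R) [x] \<noteq> {}" unfolding S_def labout_def by simp_all
    moreover have "rset G (A \<inter> R) [x] \<subseteq> rset G (B \<inter> R) [x]" by (rule rset_mono) (use that in auto)
    ultimately show "x \<in> S B" unfolding S_def labout_def by auto
  qed
  have ne: "rset G A [a] \<noteq> {}" if A: "A \<in> F" for A
  proof -
    have AA: "A \<inter> A0 \<in> F" using f1 A A0(1) by simp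
    have "S (A \<inter> A0) \<subseteq> S A0" by (rule Smono) auto
    moreover have "card (S A0) \<le> card (S (A \<inter> A0))" using A0 nle[OF AA] by simp
    ultimately have "S (A \<inter> A0) = S A0" using SF[OF A0(1)] by (simp add: card_seteq)
    then have "a \<in> S (A \<inter> A0)" using a by simp
    then have "rset G (A \<inter> A0 \<inter> R) [a] \<noteq> {}" unfolding S_def labout_def by simp
    moreover have "rset G (A \<inter> A0 \<inter> R) [a] \<subseteq> rset G A [a]" by (rule rset_mono) auto
    ultimately show ?thesis by auto
  qed
  have aA: "a \<in> alphabet G" using a unfolding S_def labout_def by simp
  have aw: "[a] \<in> words G" using single_words[OF aA] .
  define P where "P = (\<lambda>A. rset G A [a]) ` F"
  have P1: "P \<subseteq> accs G" unfolding P_def using f3 rset_accs[OF _ aw] by auto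
  have P2: "{} \<notin> P" unfolding P_def using ne by auto
  have P3: "\<forall>A\<in>P. \<forall>B\<in>P. A \<inter> B \<in> P"
  proof (intro ballI)
    fix X Y assume "X \<in> P" "Y \<in> P"
    then obtain A B where AB: "A \<in> F" "B \<in> F" "X = rset G A [a]" "Y = rset G B [a]" unfolding P_def by auto
    have "A \<inter> B \<in> F" using f1 AB by simp
    moreover have "rset G (A \<inter> B) [a] = X \<inter> Y"
      using rset_Int[OF _ _ aw] f3 AB by auto
    ultimately show "X \<inter> Y \<in> P" unfolding P_def by (metis image_eqI)
  qed
  obtain U' where U': "ultra G U'" "P \<subseteq> U'" using ultra_exists[OF P1 P2 P3] by blast
  have FU: "filt G U'" using U' unfolding ultra_def by simp
  have g1: "\<forall>A\<in>U'. \<forall>B\<in>U'. A \<inter> B \<in> U'" and g2: "\<forall>A\<in>U'. \<forall>B\<in>accs G. A \<subseteq> B \<longrightarrow> B \<in> U'"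
    and g0: "{} \<notin> U'" and g3: "U' \<subseteq> accs G"
    using FU unfolding filt_def by auto
  define Pre where "Pre = {A \<in> accs G. rset G A [a] \<in> U'}"
  have "filt G Pre" unfolding filt_def
  proof (intro conjI ballI impI)
    show "Pre \<subseteq> accs G" unfolding Pre_def by auto
    show "{} \<notin> Pre" using g0 unfolding Pre_def by auto
  next
    fix A B assume "A \<in> Pre" "B \<in> Pre"
    then have "A \<in> accs G" "B \<in> accs G" "rset G A [a] \<in> U'" "rset G B [a] \<in> U'" unfolding Pre_def by auto
    moreover have "rset G (A \<inter> B) [a] = rset G A [a] \<inter> rset G B [a]" using rset_Int[OF _ _ aw] calculation by simp
    moreover have "A \<inter> B \<in> accs G" using accs_Int calculation by simp
    ultimately show "A \<inter> B \<in> Pre" using g1 unfolding Pre_def by simp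
  next
    fix A B assume "A \<in> Pre" "B \<in> accs G" "A \<subseteq> B"
    then have "rset G A [a] \<in> U'" "rset G A [a] \<subseteq> rset G B [a]" "rset G B [a] \<in> accs G"
      using rset_mono[of A B G "[a]"] rset_accs[OF _ aw] unfolding Pre_def by auto
    then show "B \<in> Pre" using g2 \<open>B \<in> accs G\<close> unfolding Pre_def by simp
  qed
  moreover have "F \<subseteq> Pre"
  proof
    fix A assume "A \<in> F"
    then have "rset G A [a] \<in> P" "A \<in> accs G" using f3 unfolding P_def by auto
    then show "A \<in> Pre" using U'(2) unfolding Pre_def by auto
  qed
  ultimately have "Pre = F" using U unfolding ultra_def by simp
  moreover have "rw G [a] \<in> U'"
  proof -
    have "rset G R [a] \<in> U'" using U'(2) R unfolding P_def by auto
    moreover have "rset G R [a] \<subseteq> rw G [a]" using rset_sub_rw Racc by simp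
    ultimately show ?thesis using g2 rw_accs[OF aw] by simp
  qed
  ultimately show ?thesis using U' unfolding Pre_def by blast
qed

end


datatype len = Fin nat | Inf

fun lt :: "nat \<Rightarrow> len \<Rightarrow> bool" where
  "lt n (Fin m) = (n < m)" | "lt n Inf = True"
fun le :: "nat \<Rightarrow> len \<Rightarrow> bool" where
  "le n (Fin m) = (n \<le> m)" | "le n Inf = True"
fun lsuc :: "len \<Rightarrow> len" where
  "lsuc (Fin m) = Fin (Suc m)" | "lsuc Inf = Inf"
fun lpred :: "len \<Rightarrow> len" where
  "lpred (Fin m) = Fin (m - 1)" | "lpred Inf = Inf"

datatype ('a,'v) st = St (stL: len) (stW: "nat \<Rightarrow> 'a") (stF: "nat \<Rightarrow> 'v set set")

definition shcons :: "'x \<Rightarrow> (nat \<Rightarrow> 'x) \<Rightarrow> nat \<Rightarrow> 'x" where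
  "shcons a f = (\<lambda>n. case n of 0 \<Rightarrow> a | Suc m \<Rightarrow> f m)"

lemma shcons_0[simp]: "shcons a f 0 = a" and shcons_Suc[simp]: "shcons a f (Suc n) = f n"
  by (simp_all add: shcons_def)

lemma shcons_shift: "shcons (f 0) (\<lambda>n. f (Suc n)) = f"
  by (rule ext) (simp add: shcons_def split: nat.split)

lemma shift_shcons[simp]: "(\<lambda>n. shcons a f (Suc n)) = f" by simp

fun gop :: "('v,'e,'a) lspace \<Rightarrow> ('v,'a) gen \<Rightarrow> ('a,'v) st \<Rightarrow> ('a,'v) st option" where
  "gop G (GP A) x = (if A \<in> stF x 0 then Some x else None)"
| "gop G (GS a) x = (if rw G [a] \<in> stF x 0 then
      Some (St (lsuc (stL x)) (shcons a (stW x)) (shcons {A \<in> accs G. rset G A [a] \<in> stF x 0} (stF x)))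
     else None)"
| "gop G (GSt a) x = (if lt 0 (stL x) \<and> stW x 0 = a then
      Some (St (lpred (stL x)) (\<lambda>n. stW x (Suc n)) (\<lambda>n. stF x (Suc n))) else None)"

fun T :: "('v,'e,'a) lspace \<Rightarrow> ('v,'a) gen list \<Rightarrow> ('a,'v) st \<Rightarrow> ('a,'v) st option" where
  "T G [] x = Some x"
| "T G (g # u) x = Option.bind (T G u x) (gop G g)"

lemma T_append: "T G (u @ v) x = (case T G v x of None \<Rightarrow> None | Some z \<Rightarrow> T G u z)"
  by (induction u) (auto split: option.split)

definition good :: "('v,'e,'a) lspace \<Rightarrow> ('a,'v) st \<Rightarrow> bool" where
  "good G x \<longleftrightarrow> (\<forall>n. le n (stL x) \<longrightarrow> pfilt G (stF x n)) \<and>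
     (\<forall>n. lt n (stL x) \<longrightarrow> stF x n = {A \<in> accs G. rset G A [stW x n] \<in> stF x (Suc n)} \<and>
           rw G [stW x n] \<in> stF x (Suc n)) \<and>
     (\<forall>m. stL x = Fin m \<longrightarrow> (\<forall>A\<in>stF x m. \<not> regular G A))"

lemma pfilt_up: "pfilt G F \<Longrightarrow> A \<in> F \<Longrightarrow> B \<in> accs G \<Longrightarrow> A \<subseteq> B \<Longrightarrow> B \<in> F"
  unfolding pfilt_def by (metis Un_absorb1 subset_iff)

lemma le_0[simp]: "le 0 L" by (cases L) auto

lemma lt0_lsuc[simp]: "lt 0 (lsuc L)" by (cases L) auto
lemma lpred_lsuc[simp]: "lpred (lsuc L) = L" by (cases L) auto

lemma GS_GSt:
  assumes s: "gop G (GS a) x = Some y"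
  shows "gop G (GSt a) y = Some x"
proof -
  have y: "y = St (lsuc (stL x)) (shcons a (stW x)) (shcons {A \<in> accs G. rset G A [a] \<in> stF x 0} (stF x))"
    using s by (simp split: if_splits)
  show ?thesis unfolding y by (cases x) simp
qed

context NL
begin

lemma good_F0: "good G x \<Longrightarrow> pfilt G (stF x 0)"
  unfolding good_def by simp

lemma good_lt0:
  assumes g: "good G x" and l: "lt 0 (stL x)"
  shows "stF x 0 = {A \<in> accs G. rset G A [stW x 0] \<in> stF x (Suc 0)}" "rw G [stW x 0] \<in> stF x (Suc 0)"
  using g l unfolding good_def by auto

lemma alph_of_F: "pfilt G F \<Longrightarrow> rset G A [a] \<in> F \<Longrightarrow> a \<in> alphabet G"
proof -
  assume "pfilt G F" "rset G A [a] \<in> F"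
  then have "rset G A [a] \<noteq> {}" unfolding pfilt_def by auto
  then show "a \<in> alphabet G" by (rule rset_single_ne_alphabet)
qed

lemma GSt_GS:
  assumes g: "good G x" and s: "gop G (GSt a) x = Some y"
  shows "gop G (GS a) y = Some x"
proof -
  have l: "lt 0 (stL x)" and w: "stW x 0 = a" and y: "y = St (lpred (stL x)) (\<lambda>n. stW x (Suc n)) (\<lambda>n. stF x (Suc n))"
    using s by (auto split: if_splits)
  have F0: "stF x 0 = {A \<in> accs G. rset G A [a] \<in> stF x (Suc 0)}" and r: "rw G [a] \<in> stF x (Suc 0)"
    using good_lt0[OF g l] w by auto
  have "lsuc (lpred (stL x)) = stL x" using l by (cases "stL x") auto
  moreover have "shcons a (\<lambda>n. stW x (Suc n)) = stW x" using shcons_shift[of "stW x"] w by simp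
  moreover have "shcons {A \<in> accs G. rset G A [a] \<in> stF x (Suc 0)} (\<lambda>n. stF x (Suc n)) = stF x"
    using shcons_shift[of "stF x"] F0 by simp
  ultimately show ?thesis using y r by (cases x) simp
qed

lemma good_GS:
  assumes g: "good G x" and s: "gop G (GS a) x = Some y"
  shows "good G y"
proof -
  have r: "rw G [a] \<in> stF x 0" and y: "y = St (lsuc (stL x)) (shcons a (stW x)) (shcons {A \<in> accs G. rset G A [a] \<in> stF x 0} (stF x))"
    using s by (auto split: if_splits)
  have p0: "pfilt G (stF x 0)" using good_F0[OF g] .
  have aA: "a \<in> alphabet G" using alph_of_F[OF p0] r unfolding rw_def by simp
  have aw: "[a] \<in> words G" by (rule single_words[OF aA])
  define F' where "F' = {A \<in> accs G. rset G A [a] \<in> stF x 0}"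
  have pF': "pfilt G F'" unfolding pfilt_def
  proof (intro conjI ballI)
    show "F' \<subseteq> accs G" unfolding F'_def by auto
    show "{} \<notin> F'" using p0 unfolding F'_def pfilt_def by auto
  next
    fix A B assume AB: "A \<in> accs G" "B \<in> accs G"
    have ra: "rset G A [a] \<in> accs G" "rset G B [a] \<in> accs G" using rset_accs[OF _ aw] AB by auto
    have i: "rset G (A \<inter> B) [a] = rset G A [a] \<inter> rset G B [a]" using rset_Int[OF AB aw] by simp
    have u: "rset G (A \<union> B) [a] = rset G A [a] \<union> rset G B [a]" by (rule rset_Un)
    have q: "(rset G A [a] \<inter> rset G B [a] \<in> stF x 0) = (rset G A [a] \<in> stF x 0 \<and> rset G B [a] \<in> stF x 0)"
      "(rset G A [a] \<union> rset G B [a] \<in> stF x 0) = (rset G A [a] \<in> stF x 0 \<or> rset G B [a] \<in> stF x 0)"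
      using p0 ra unfolding pfilt_def by blast+
    show "(A \<inter> B \<in> F') = (A \<in> F' \<and> B \<in> F')"
      unfolding F'_def using q(1) i AB accs_Int[OF AB] by auto
    show "(A \<union> B \<in> F') = (A \<in> F' \<or> B \<in> F')"
      unfolding F'_def using q(2) u AB accs_Un[OF AB] by auto
  qed
  have g1: "\<And>n. le n (stL x) \<Longrightarrow> pfilt G (stF x n)"
    and g2: "\<And>n. lt n (stL x) \<Longrightarrow> stF x n = {A \<in> accs G. rset G A [stW x n] \<in> stF x (Suc n)} \<and>
           rw G [stW x n] \<in> stF x (Suc n)"
    and g3: "\<And>m. stL x = Fin m \<Longrightarrow> (\<forall>A\<in>stF x m. \<not> regular G A)"
    using g unfolding good_def by auto
  have le_suc: "le m (stL x)" if "le (Suc m) (lsuc (stL x))" for m using that by (cases "stL x") auto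
  have lt_suc: "lt m (stL x)" if "lt (Suc m) (lsuc (stL x))" for m using that by (cases "stL x") auto
  show ?thesis unfolding good_def y st.sel
  proof (intro conjI allI impI)
    fix n assume n: "le n (lsuc (stL x))"
    show "pfilt G (shcons {A \<in> accs G. rset G A [a] \<in> stF x 0} (stF x) n)"
    proof (cases n)
      case 0 then show ?thesis using pF' unfolding F'_def by simp
    next
      case (Suc m) then show ?thesis using g1 le_suc n by simp
    qed
  next
    fix n assume n: "lt n (lsuc (stL x))"
    show "shcons {A \<in> accs G. rset G A [a] \<in> stF x 0} (stF x) n =
        {A \<in> accs G. rset G A [shcons a (stW x) n] \<in> shcons {A \<in> accs G. rset G A [a] \<in> stF x 0} (stF x) (Suc n)}"
    proof (cases n)
      case 0 then show ?thesis by simp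
    next
      case (Suc m) then show ?thesis using g2 lt_suc n by simp
    qed
  next
    fix n assume n: "lt n (lsuc (stL x))"
    show "rw G [shcons a (stW x) n] \<in> shcons {A \<in> accs G. rset G A [a] \<in> stF x 0} (stF x) (Suc n)"
    proof (cases n)
      case 0 then show ?thesis using r by simp
    next
      case (Suc m) then show ?thesis using g2 lt_suc n by simp
    qed
  next
    fix m assume m: "lsuc (stL x) = Fin m"
    then obtain k where k: "stL x = Fin k" "m = Suc k" by (cases "stL x") auto
    then show "\<forall>A\<in>shcons {A \<in> accs G. rset G A [a] \<in> stF x 0} (stF x) m. \<not> regular G A"
      using g3 by simp
  qed
qed

lemma good_gop:
  assumes g: "good G x" and s: "gop G c x = Some y"
  shows "good G y"
proof (cases c)
  case (GP A) then show ?thesis using g s by (auto split: if_splits)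
next
  case (GS a) then show ?thesis using good_GS g s by simp
next
  case (GSt a)
  then have l: "lt 0 (stL x)" and y: "y = St (lpred (stL x)) (\<lambda>n. stW x (Suc n)) (\<lambda>n. stF x (Suc n))"
    using s by (auto split: if_splits)
  have g1: "\<And>n. le n (stL x) \<Longrightarrow> pfilt G (stF x n)"
    and g2: "\<And>n. lt n (stL x) \<Longrightarrow> stF x n = {A \<in> accs G. rset G A [stW x n] \<in> stF x (Suc n)} \<and>
           rw G [stW x n] \<in> stF x (Suc n)"
    and g3: "\<And>m. stL x = Fin m \<Longrightarrow> (\<forall>A\<in>stF x m. \<not> regular G A)"
    using g unfolding good_def by auto
  have le_p: "le (Suc m) (stL x)" if "le m (lpred (stL x))" for m using that l by (cases "stL x") auto
  have lt_p: "lt (Suc m) (stL x)" if "lt m (lpred (stL x))" for m using that l by (cases "stL x") auto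
  show ?thesis unfolding good_def y st.sel
  proof (intro conjI allI impI)
    fix n assume "le n (lpred (stL x))"
    then show "pfilt G (stF x (Suc n))" using g1 le_p by simp
  next
    fix n assume "lt n (lpred (stL x))"
    then show "stF x (Suc n) = {A \<in> accs G. rset G A [stW x (Suc n)] \<in> stF x (Suc (Suc n))}"
      using g2 lt_p by simp
  next
    fix n assume "lt n (lpred (stL x))"
    then show "rw G [stW x (Suc n)] \<in> stF x (Suc (Suc n))"
      using g2 lt_p by simp
  next
    fix m assume "lpred (stL x) = Fin m"
    then have "stL x = Fin (Suc m)" using l by (cases "stL x") auto
    then show "\<forall>A\<in>stF x (Suc m). \<not> regular G A" using g3 by simp
  qed
qed

lemma good_T: "good G x \<Longrightarrow> T G u x = Some y \<Longrightarrow> good G y"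
proof (induction u arbitrary: y)
  case Nil then show ?case by simp
next
  case (Cons c u)
  then obtain z where z: "T G u x = Some z" "gop G c z = Some y" by (cases "T G u x") auto
  then show ?case using Cons good_gop by blast
qed

end


context NL
begin

lemma exists_good:
  assumes C: "C \<in> accs G" "C \<noteq> {}"
  shows "\<exists>x. good G x \<and> C \<in> stF x 0"
proof -
  have P3: "\<forall>A\<in>{C}. \<forall>B\<in>{C}. A \<inter> B \<in> {C}" by simp
  obtain F0 where F0: "ultra G F0" "{C} \<subseteq> F0" using ultra_exists[of "{C}"] C P3 by auto
  define Q where "Q F p \<longleftrightarrow> ultra G (snd p) \<and> F = {A \<in> accs G. rset G A [fst p] \<in> snd p} \<and> rw G [fst p] \<in> snd p"
    for F :: "'v set set" and p :: "'a \<times> 'v set set"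
  define nxt where "nxt F = (SOME p. Q F p)" for F
  define Ff where "Ff n = ((\<lambda>F. snd (nxt F)) ^^ n) F0" for n
  define wf where "wf n = fst (nxt (Ff n))" for n
  have Ff0: "Ff 0 = F0" and FfS: "Ff (Suc n) = snd (nxt (Ff n))" for n unfolding Ff_def by simp_all
  define hasreg where "hasreg n \<longleftrightarrow> (\<exists>R\<in>Ff n. regular G R)" for n
  have nxtQ: "Q (Ff n) (nxt (Ff n))" if hu: "ultra G (Ff n)" "hasreg n" for n
  proof -
    obtain R where "R \<in> Ff n" "regular G R" using hu(2) by (auto simp: hasreg_def)
    then obtain a U' where "ultra G U' \<and> Ff n = {A \<in> accs G. rset G A [a] \<in> U'} \<and> rw G [a] \<in> U'"
      using step hu(1) by blast
    then have "Q (Ff n) (a, U')" unfolding Q_def by simp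
    then show ?thesis unfolding nxt_def by (rule someI)
  qed
  have ultra_n: "ultra G (Ff n)" if "\<forall>m<n. hasreg m" for n
    using that
  proof (induction n)
    case 0 then show ?case using F0 Ff0 by simp
  next
    case (Suc n)
    then have "ultra G (Ff n)" "hasreg n" by auto
    then have "Q (Ff n) (nxt (Ff n))" by (rule nxtQ)
    then show ?case unfolding Q_def FfS by simp
  qed
  define L where "L = (if \<exists>n. \<not> hasreg n then Fin (LEAST n. \<not> hasreg n) else Inf)"
  have le_reg: "\<forall>m<n. hasreg m" if "le n L" for n
  proof (cases "\<exists>n. \<not> hasreg n")
    case True
    then have "L = Fin (LEAST n. \<not> hasreg n)" unfolding L_def by simp
    then have "n \<le> (LEAST n. \<not> hasreg n)" using that by simp
    then show ?thesis using not_less_Least[of _ "\<lambda>n. \<not> hasreg n"] by (meson less_le_trans)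
  next
    case False then show ?thesis by simp
  qed
  have lt_reg: "hasreg n" if "lt n L" for n
  proof (cases "\<exists>n. \<not> hasreg n")
    case True
    then have "L = Fin (LEAST n. \<not> hasreg n)" unfolding L_def by simp
    then have "n < (LEAST n. \<not> hasreg n)" using that by simp
    then show ?thesis using not_less_Least[of _ "\<lambda>n. \<not> hasreg n"] by blast
  next
    case False then show ?thesis by simp
  qed
  have lt_le: "le n L" if "lt n L" for n using that by (cases L) auto
  define x where "x = St L wf Ff"
  have "good G x" unfolding good_def x_def st.sel
  proof (intro conjI allI impI)
    fix n assume "le n L"
    then show "pfilt G (Ff n)" using ultra_n le_reg ultra_pfilt by blast
  next
    fix n assume n: "lt n L"
    then have "Q (Ff n) (nxt (Ff n))" using nxtQ ultra_n le_reg lt_le lt_reg by blast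
    then show "Ff n = {A \<in> accs G. rset G A [wf n] \<in> Ff (Suc n)}" unfolding Q_def wf_def FfS by simp
  next
    fix n assume n: "lt n L"
    then have "Q (Ff n) (nxt (Ff n))" using nxtQ ultra_n le_reg lt_le lt_reg by blast
    then show "rw G [wf n] \<in> Ff (Suc n)" unfolding Q_def wf_def FfS by simp
  next
    fix m assume m: "L = Fin m"
    then have ex: "\<exists>n. \<not> hasreg n" unfolding L_def by (auto split: if_splits)
    then have "m = (LEAST n. \<not> hasreg n)" using m unfolding L_def by simp
    then have "\<not> hasreg m" using ex by (metis LeastI)
    then show "\<forall>A\<in>Ff m. \<not> regular G A" by (simp add: hasreg_def)
  qed
  moreover have "C \<in> stF x 0" unfolding x_def using F0 Ff0 by simp
  ultimately show ?thesis by blast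
qed

end


declare sum_mult_of_bool_eq[simp del] sum_of_bool_mult_eq[simp del]

definition supp :: "('v,'a,'r::comm_ring_1) fa \<Rightarrow> ('v,'a) gen list set" where
  "supp f = {u. f u \<noteq> 0}"

definition ev :: "('v,'e,'a) lspace \<Rightarrow> ('a,'v) st \<Rightarrow> ('a,'v) st \<Rightarrow> ('v,'a,'r::comm_ring_1) fa \<Rightarrow> 'r" where
  "ev G x y f = (\<Sum>u\<in>supp f. f u * of_bool (T G u x = Some y))"

lemma ev_U:
  assumes "finite U" "supp f \<subseteq> U"
  shows "ev G x y f = (\<Sum>u\<in>U. f u * of_bool (T G u x = Some y))"
  unfolding ev_def
  by (rule sum.mono_neutral_left[OF assms]) (auto simp: supp_def)

lemma supp_mono: "supp (mono c u) \<subseteq> {u}"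
  unfolding supp_def mono_def by auto
lemma supp_add: "supp (fa_add f g) \<subseteq> supp f \<union> supp g"
  unfolding supp_def fa_add_def by auto
lemma supp_sub: "supp (fa_sub f g) \<subseteq> supp f \<union> supp g"
  unfolding supp_def fa_sub_def by auto
lemma supp_smult: "supp (fa_smult c f) \<subseteq> supp f"
  unfolding supp_def fa_smult_def by auto
lemma supp_sum: "supp (fa_sum F I) \<subseteq> (\<Union>i\<in>I. supp (F i))"
proof
  fix u assume "u \<in> supp (fa_sum F I)"
  then have "(\<Sum>i\<in>I. F i u) \<noteq> 0" unfolding supp_def fa_sum_def by simp
  then obtain i where "i \<in> I" "F i u \<noteq> 0" by (meson sum.neutral)
  then show "u \<in> (\<Union>i\<in>I. supp (F i))" unfolding supp_def by auto
qed

lemma fin_mono: "finite (supp (mono c u))" using supp_mono finite_subset by blast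

lemma ev_mono: "ev G x y (mono c u) = c * of_bool (T G u x = Some y)"
proof -
  have "ev G x y (mono c u) = (\<Sum>w\<in>{u}. mono c u w * of_bool (T G w x = Some y))"
    by (rule ev_U) (simp_all add: supp_mono)
  then show ?thesis by (simp add: mono_def)
qed

lemma ev_add:
  assumes "finite (supp f)" "finite (supp g)"
  shows "ev G x y (fa_add f g) = ev G x y f + ev G x y g"
proof -
  let ?U = "supp f \<union> supp g"
  have "ev G x y (fa_add f g) = (\<Sum>u\<in>?U. fa_add f g u * of_bool (T G u x = Some y))"
    by (rule ev_U) (use assms supp_add in auto)
  also have "\<dots> = (\<Sum>u\<in>?U. f u * of_bool (T G u x = Some y)) + (\<Sum>u\<in>?U. g u * of_bool (T G u x = Some y))"
    unfolding fa_add_def by (simp add: distrib_right sum.distrib)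
  also have "\<dots> = ev G x y f + ev G x y g"
    using ev_U[of ?U f G x y] ev_U[of ?U g G x y] assms by auto
  finally show ?thesis .
qed

lemma ev_sub:
  assumes "finite (supp f)" "finite (supp g)"
  shows "ev G x y (fa_sub f g) = ev G x y f - ev G x y g"
proof -
  let ?U = "supp f \<union> supp g"
  have "ev G x y (fa_sub f g) = (\<Sum>u\<in>?U. fa_sub f g u * of_bool (T G u x = Some y))"
    by (rule ev_U) (use assms supp_sub in auto)
  also have "\<dots> = (\<Sum>u\<in>?U. f u * of_bool (T G u x = Some y)) - (\<Sum>u\<in>?U. g u * of_bool (T G u x = Some y))"
    unfolding fa_sub_def by (simp add: left_diff_distrib sum_subtractf)
  also have "\<dots> = ev G x y f - ev G x y g"
    using ev_U[of ?U f G x y] ev_U[of ?U g G x y] assms by auto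
  finally show ?thesis .
qed

lemma ev_sum:
  assumes "finite I" "\<And>i. i \<in> I \<Longrightarrow> finite (supp (F i))"
  shows "ev G x y (fa_sum F I) = (\<Sum>i\<in>I. ev G x y (F i))"
proof -
  let ?U = "\<Union>i\<in>I. supp (F i)"
  have fU: "finite ?U" using assms by auto
  have "ev G x y (fa_sum F I) = (\<Sum>u\<in>?U. fa_sum F I u * of_bool (T G u x = Some y))"
    by (rule ev_U[OF fU supp_sum])
  also have "\<dots> = (\<Sum>i\<in>I. \<Sum>u\<in>?U. F i u * of_bool (T G u x = Some y))"
    unfolding fa_sum_def by (simp add: sum_distrib_right sum.swap[of _ I])
  also have "\<dots> = (\<Sum>i\<in>I. ev G x y (F i))"
    by (rule sum.cong[OF refl], rule ev_U[symmetric, OF fU]) auto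
  finally show ?thesis .
qed

lemma smult_mono: "fa_smult r (mono c u) = mono (r * c) u"
  unfolding fa_smult_def mono_def by auto

lemma take_ne: "i \<le> length w \<Longrightarrow> i \<noteq> length u \<Longrightarrow> take i w \<noteq> u"
  by auto

lemma mult_left: "fa_mult (mono c u) f w = (if take (length u) w = u then c * f (drop (length u) w) else 0)"
proof -
  have "fa_mult (mono c u) f w = (\<Sum>i\<in>{..length w}. (if i = length u then (if take (length u) w = u then c * f (drop (length u) w) else 0) else 0))"
    unfolding fa_mult_def
  proof (rule sum.cong[OF refl])
    fix i assume i: "i \<in> {..length w}"
    show "mono c u (take i w) * f (drop i w) = (if i = length u then (if take (length u) w = u then c * f (drop (length u) w) else 0) else 0)"
    proof (cases "i = length u")
      case True then show ?thesis by (simp add: mono_def)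
    next
      case False then show ?thesis using take_ne[of i w u] i by (simp add: mono_def)
    qed
  qed
  also have "\<dots> = (if take (length u) w = u then c * f (drop (length u) w) else 0)"
    by (auto simp: sum.delta)
  finally show ?thesis .
qed

lemma drop_ne: "i \<le> length w \<Longrightarrow> i \<noteq> length w - length v \<Longrightarrow> drop i w \<noteq> v"
  by auto

lemma mult_right: "fa_mult g (mono 1 v) w =
   (if drop (length w - length v) w = v then g (take (length w - length v) w) else 0)"
proof -
  have "fa_mult g (mono 1 v) w = (\<Sum>i\<in>{..length w}. (if i = length w - length v then
      (if drop (length w - length v) w = v then g (take (length w - length v) w) else 0) else 0))"
    unfolding fa_mult_def
  proof (rule sum.cong[OF refl])
    fix i assume i: "i \<in> {..length w}"
    show "g (take i w) * mono 1 v (drop i w) = (if i = length w - length v then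
      (if drop (length w - length v) w = v then g (take (length w - length v) w) else 0) else 0)"
    proof (cases "i = length w - length v")
      case True then show ?thesis by (simp add: mono_def)
    next
      case False then show ?thesis using drop_ne[of i w v] i by (simp add: mono_def)
    qed
  qed
  also have "\<dots> = (if drop (length w - length v) w = v then g (take (length w - length v) w) else 0)"
    by (auto simp: sum.delta)
  finally show ?thesis .
qed

lemma mono_mult: "fa_mult (mono c u) (mono d v) = mono (c * d) (u @ v)"
proof (rule ext)
  fix w
  show "fa_mult (mono c u) (mono d v) w = mono (c * d) (u @ v) w"
  proof -
    have a: "take (length u) w = u \<Longrightarrow> w = u @ drop (length u) w" by (metis append_take_drop_id)
    show ?thesis unfolding mult_left using a by (auto simp: mono_def append_eq_conv_conj)
  qed
qed

lemma sandwich_val: "fa_mult (fa_mult (mono c u) f) (mono 1 v) (u @ z @ v) = c * f z"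
  unfolding mult_right mult_left by simp

lemma sandwich_supp: "supp (fa_mult (fa_mult (mono c u) f) (mono 1 v)) \<subseteq> (\<lambda>z. u @ z @ v) ` supp f"
proof
  fix w assume "w \<in> supp (fa_mult (fa_mult (mono c u) f) (mono 1 v))"
  then have nz: "fa_mult (fa_mult (mono c u) f) (mono 1 v) w \<noteq> 0" unfolding supp_def by simp
  define k where "k = length w - length v"
  define z where "z = drop (length u) (take k w)"
  have d: "drop k w = v" and t: "take (length u) (take k w) = u" and fz: "f z \<noteq> 0"
    using nz unfolding mult_right mult_left k_def[symmetric] z_def[symmetric] by (auto split: if_splits)
  have "w = take k w @ v" using d by (metis append_take_drop_id)
  also have "take k w = u @ z" using t unfolding z_def by (metis append_take_drop_id)
  finally have "w = u @ z @ v" by simp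
  then show "w \<in> (\<lambda>z. u @ z @ v) ` supp f" using fz unfolding supp_def by auto
qed

definition killed :: "('v,'e,'a) lspace \<Rightarrow> ('v,'a,'r::comm_ring_1) fa \<Rightarrow> bool" where
  "killed G f \<longleftrightarrow> finite (supp f) \<and> (\<forall>x y. good G x \<longrightarrow> ev G x y f = 0)"

context NL
begin

lemma killed_sandwich:
  assumes k: "killed G f"
  shows "killed G (fa_mult (fa_mult (mono c u) f) (mono 1 v))"
proof -
  let ?h = "fa_mult (fa_mult (mono c u) f) (mono 1 v)"
  let ?S = "supp f"
  have fS: "finite ?S" and z: "\<And>x y. good G x \<Longrightarrow> ev G x y f = 0" using k unfolding killed_def by auto
  have fI: "finite ((\<lambda>z. u @ z @ v) ` ?S)" using fS by simp
  have fh: "finite (supp ?h)" using finite_subset[OF sandwich_supp fI] .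
  have "ev G x y ?h = 0" if g: "good G x" for x y
  proof -
    have "ev G x y ?h = (\<Sum>w\<in>(\<lambda>z. u @ z @ v) ` ?S. ?h w * of_bool (T G w x = Some y))"
      by (rule ev_U[OF fI sandwich_supp])
    also have "\<dots> = (\<Sum>z\<in>?S. c * f z * of_bool (T G (u @ z @ v) x = Some y))"
      by (subst sum.reindex) (auto simp: inj_on_def sandwich_val)
    also have "\<dots> = 0"
    proof (cases "T G v x")
      case None
      then show ?thesis by (simp add: T_append)
    next
      case (Some x')
      have gx': "good G x'" using good_T[OF g Some] .
      define K where "K o' = (case o' of None \<Rightarrow> False | Some y' \<Rightarrow> T G u y' = Some y)" for o'
      have eqT: "(T G (u @ z @ v) x = Some y) = K (T G z x')" for z
        using Some unfolding K_def by (simp add: T_append split: option.split)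
      have "(\<Sum>z\<in>?S. c * f z * of_bool (T G (u @ z @ v) x = Some y)) =
            (\<Sum>z\<in>?S. c * f z * of_bool (K (T G z x')))"
        using eqT by simp
      also have "\<dots> = (\<Sum>o'\<in>(\<lambda>z. T G z x') ` ?S. \<Sum>z\<in>{z. z \<in> ?S \<and> T G z x' = o'}. c * f z * of_bool (K (T G z x')))"
        by (rule sum.image_gen[OF fS])
      also have "\<dots> = (\<Sum>o'\<in>(\<lambda>z. T G z x') ` ?S. 0)"
      proof (rule sum.cong[OF refl])
        fix o' assume "o' \<in> (\<lambda>z. T G z x') ` ?S"
        show "(\<Sum>z\<in>{z. z \<in> ?S \<and> T G z x' = o'}. c * f z * of_bool (K (T G z x'))) = 0"
        proof (cases o')
          case None then show ?thesis by (simp add: K_def)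
        next
          case (Some y')
          have "(\<Sum>z\<in>{z. z \<in> ?S \<and> T G z x' = o'}. c * f z * of_bool (K (T G z x'))) =
                c * of_bool (K o') * (\<Sum>z\<in>{z. z \<in> ?S \<and> T G z x' = o'}. f z)"
            by (simp add: sum_distrib_left mult_ac)
          also have "(\<Sum>z\<in>{z. z \<in> ?S \<and> T G z x' = o'}. f z) = ev G x' y' f"
            unfolding ev_def Some using fS by (simp add: sum_mult_of_bool_eq Int_def)
          also have "\<dots> = 0" using z[OF gx'] .
          finally show ?thesis by simp
        qed
      qed
      also have "\<dots> = 0" by simp
      finally show ?thesis .
    qed
    finally show ?thesis .
  qed
  then show ?thesis unfolding killed_def using fh by auto
qed

end


lemma killed_eqT:
  assumes "\<And>x. good G x \<Longrightarrow> T G u1 x = T G u2 x"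
  shows "killed G (fa_sub (mono 1 u1) (mono 1 u2) :: ('v,'a,'r::comm_ring_1) fa)"
  unfolding killed_def
proof (intro conjI allI impI)
  show "finite (supp (fa_sub (mono 1 u1) (mono 1 u2) :: ('v,'a,'r) fa))"
    using supp_sub[of "mono 1 u1" "mono 1 u2"] fin_mono[of 1 u1] fin_mono[of 1 u2] finite_subset by blast
  fix x y assume "good G x"
  then show "ev G x y (fa_sub (mono 1 u1) (mono 1 u2) :: ('v,'a,'r) fa) = 0"
    using assms by (simp add: ev_sub fin_mono ev_mono)
qed

lemma killed_none:
  assumes "\<And>x. good G x \<Longrightarrow> T G u x = None"
  shows "killed G (mono 1 u :: ('v,'a,'r::comm_ring_1) fa)"
  unfolding killed_def using assms by (simp add: fin_mono ev_mono)

context NL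
begin

lemma gF0: "good G x \<Longrightarrow> pfilt G (stF x 0)" by (rule good_F0)

lemma rel_int:
  assumes "A \<in> accs G" "B \<in> accs G"
  shows "killed G (fa_sub (pA (A \<inter> B)) (fa_mult (pA A) (pA B)) :: ('v,'a,'r::comm_ring_1) fa)"
proof -
  have "killed G (fa_sub (mono 1 [GP (A \<inter> B)]) (mono 1 [GP A, GP B]) :: ('v,'a,'r) fa)"
  proof (rule killed_eqT)
    fix x :: "('a,'v) st" assume g: "good G x"
    have "(A \<inter> B \<in> stF x 0) = (A \<in> stF x 0 \<and> B \<in> stF x 0)" using gF0[OF g] assms unfolding pfilt_def by blast
    then show "T G [GP (A \<inter> B)] x = T G [GP A, GP B] x" by simp
  qed
  then show ?thesis by (simp add: pA_def mono_mult)
qed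

lemma rel_un:
  assumes "A \<in> accs G" "B \<in> accs G"
  shows "killed G (fa_sub (pA (A \<union> B)) (fa_sub (fa_add (pA A) (pA B)) (pA (A \<inter> B))) :: ('v,'a,'r::comm_ring_1) fa)"
  unfolding killed_def
proof (intro conjI allI impI)
  have f: "finite (supp (pA X :: ('v,'a,'r) fa))" for X unfolding pA_def by (rule fin_mono)
  have f2: "finite (supp (fa_add (pA A) (pA B) :: ('v,'a,'r) fa))"
    using supp_add[of "pA A" "pA B"] f[of A] f[of B] finite_subset by blast
  have f3: "finite (supp (fa_sub (fa_add (pA A) (pA B)) (pA (A \<inter> B)) :: ('v,'a,'r) fa))"
    using supp_sub f2 f[of "A \<inter> B"] finite_subset by blast
  show "finite (supp (fa_sub (pA (A \<union> B)) (fa_sub (fa_add (pA A) (pA B)) (pA (A \<inter> B))) :: ('v,'a,'r) fa))"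
    using supp_sub f3 f[of "A \<union> B"] finite_subset by blast
  fix x y assume g: "good G x"
  have i: "(A \<inter> B \<in> stF x 0) = (A \<in> stF x 0 \<and> B \<in> stF x 0)"
    and u: "(A \<union> B \<in> stF x 0) = (A \<in> stF x 0 \<or> B \<in> stF x 0)"
    using gF0[OF g] assms unfolding pfilt_def by blast+
  have "ev G x y (fa_sub (pA (A \<union> B)) (fa_sub (fa_add (pA A) (pA B)) (pA (A \<inter> B))) :: ('v,'a,'r) fa)
     = of_bool (A \<union> B \<in> stF x 0 \<and> x = y) - (of_bool (A \<in> stF x 0 \<and> x = y) + of_bool (B \<in> stF x 0 \<and> x = y)
        - of_bool (A \<inter> B \<in> stF x 0 \<and> x = y))"
    using f f2 f3 by (simp add: ev_sub ev_add pA_def ev_mono)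
  also have "\<dots> = 0" unfolding i u by (cases "A \<in> stF x 0"; cases "B \<in> stF x 0"; cases "x = y") simp_all
  finally show "ev G x y (fa_sub (pA (A \<union> B)) (fa_sub (fa_add (pA A) (pA B)) (pA (A \<inter> B))) :: ('v,'a,'r) fa) = 0" .
qed

lemma rel_empty: "killed G (pA {} :: ('v,'a,'r::comm_ring_1) fa)"
  unfolding pA_def
proof (rule killed_none)
  fix x :: "('a,'v) st" assume "good G x"
  then have "{} \<notin> stF x 0" using gF0 unfolding pfilt_def by blast
  then show "T G [GP {}] x = None" by simp
qed

lemma rel_ps:
  assumes A: "A \<in> accs G"
  shows "killed G (fa_sub (fa_mult (pA A) (sa a)) (fa_mult (sa a) (pA (rset G A [a]))) :: ('v,'a,'r::comm_ring_1) fa)"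
proof -
  have "killed G (fa_sub (mono 1 [GP A, GS a]) (mono 1 [GS a, GP (rset G A [a])]) :: ('v,'a,'r) fa)"
  proof (rule killed_eqT)
    fix x :: "('a,'v) st" assume g: "good G x"
    show "T G [GP A, GS a] x = T G [GS a, GP (rset G A [a])] x"
      using A by simp
  qed
  then show ?thesis by (simp add: pA_def sa_def mono_mult)
qed

lemma rel_sp:
  assumes A: "A \<in> accs G"
  shows "killed G (fa_sub (fa_mult (sast a) (pA A)) (fa_mult (pA (rset G A [a])) (sast a)) :: ('v,'a,'r::comm_ring_1) fa)"
proof -
  have "killed G (fa_sub (mono 1 [GSt a, GP A]) (mono 1 [GP (rset G A [a]), GSt a]) :: ('v,'a,'r) fa)"
  proof (rule killed_eqT)
    fix x :: "('a,'v) st" assume g: "good G x"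
    show "T G [GSt a, GP A] x = T G [GP (rset G A [a]), GSt a] x"
    proof (cases "lt 0 (stL x) \<and> stW x 0 = a")
      case True
      then have "stF x 0 = {A \<in> accs G. rset G A [a] \<in> stF x (Suc 0)}" using good_lt0[OF g] by auto
      then have "(A \<in> stF x 0) = (rset G A [a] \<in> stF x (Suc 0))" using A by auto
      then show ?thesis using True by simp
    next
      case False then show ?thesis by auto
    qed
  qed
  then show ?thesis by (simp add: pA_def sast_def mono_mult)
qed

lemma rel_ss:
  "killed G (fa_sub (fa_mult (sast a) (sa a)) (pA (rw G [a])) :: ('v,'a,'r::comm_ring_1) fa)"
proof -
  have "killed G (fa_sub (mono 1 [GSt a, GS a]) (mono 1 [GP (rw G [a])]) :: ('v,'a,'r) fa)"
  proof (rule killed_eqT)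
    fix x :: "('a,'v) st" assume g: "good G x"
    show "T G [GSt a, GS a] x = T G [GP (rw G [a])] x"
    proof (cases "gop G (GS a) x")
      case None then show ?thesis by (simp split: if_splits)
    next
      case (Some y)
      then have "rw G [a] \<in> stF x 0" by (simp split: if_splits)
      then show ?thesis using Some GS_GSt[OF Some] by simp
    qed
  qed
  then show ?thesis by (simp add: pA_def sa_def sast_def mono_mult)
qed

lemma rel_ss0:
  assumes "b \<noteq> a"
  shows "killed G (fa_mult (sast b) (sa a) :: ('v,'a,'r::comm_ring_1) fa)"
proof -
  have "killed G (mono 1 [GSt b, GS a] :: ('v,'a,'r) fa)"
  proof (rule killed_none)
    fix x :: "('a,'v) st" assume g: "good G x"
    show "T G [GSt b, GS a] x = None" using assms by simp
  qed
  then show ?thesis by (simp add: sa_def sast_def mono_mult)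
qed

lemma rel_sss:
  "killed G (fa_sub (fa_mult (fa_mult (sa a) (sast a)) (sa a)) (sa a) :: ('v,'a,'r::comm_ring_1) fa)"
proof -
  have "killed G (fa_sub (mono 1 [GS a, GSt a, GS a]) (mono 1 [GS a]) :: ('v,'a,'r) fa)"
  proof (rule killed_eqT)
    fix x :: "('a,'v) st" assume g: "good G x"
    show "T G [GS a, GSt a, GS a] x = T G [GS a] x"
    proof (cases "gop G (GS a) x")
      case None then show ?thesis by simp
    next
      case (Some y)
      then show ?thesis using GS_GSt[OF Some] by simp
    qed
  qed
  then show ?thesis by (simp add: sa_def sast_def mono_mult)
qed

lemma rel_sss2:
  "killed G (fa_sub (fa_mult (fa_mult (sast a) (sa a)) (sast a)) (sast a) :: ('v,'a,'r::comm_ring_1) fa)"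
proof -
  have "killed G (fa_sub (mono 1 [GSt a, GS a, GSt a]) (mono 1 [GSt a]) :: ('v,'a,'r) fa)"
  proof (rule killed_eqT)
    fix x :: "('a,'v) st" assume g: "good G x"
    show "T G [GSt a, GS a, GSt a] x = T G [GSt a] x"
    proof (cases "gop G (GSt a) x")
      case None then show ?thesis by simp
    next
      case (Some y)
      then show ?thesis using GSt_GS[OF g Some] by simp
    qed
  qed
  then show ?thesis by (simp add: sa_def sast_def mono_mult)
qed

lemma T_ck:
  assumes g: "good G x" and A: "A \<in> accs G"
  shows "T G [GS a, GP (rset G A [a]), GSt a] x =
     (if lt 0 (stL x) \<and> stW x 0 = a \<and> A \<in> stF x 0 then Some x else None)"
proof (cases "gop G (GSt a) x")
  case None
  then have "\<not> (lt 0 (stL x) \<and> stW x 0 = a)" by (simp split: if_splits)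
  then show ?thesis using None by auto
next
  case (Some y)
  then have l: "lt 0 (stL x)" "stW x 0 = a" and ys: "y = St (lpred (stL x)) (\<lambda>n. stW x (Suc n)) (\<lambda>n. stF x (Suc n))"
    by (simp_all split: if_splits)
  have "stF x 0 = {A \<in> accs G. rset G A [a] \<in> stF x (Suc 0)}" using good_lt0[OF g l(1)] l(2) by auto
  then have e: "(A \<in> stF x 0) = (rset G A [a] \<in> stF y 0)" using A ys by auto
  show ?thesis using Some GSt_GS[OF g Some] l e by simp
qed

lemma rel_ck:
  assumes A: "A \<in> Breg G" "A \<in> accs G"
  shows "killed G (fa_sub (pA A) (fa_sum (\<lambda>a. fa_mult (fa_mult (sa a) (pA (rset G A [a]))) (sast a))
                             (labout G A)) :: ('v,'a,'r::comm_ring_1) fa)"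
proof -
  have finL: "finite (labout G A)"
  proof (cases "A = {}")
    case True then show ?thesis unfolding labout_def by simp
  next
    case False then have "regular G A" using A(1) unfolding Breg_def by simp
    then show ?thesis using False A(2) unfolding regular_def by blast
  qed
  let ?F = "\<lambda>a. mono 1 [GS a, GP (rset G A [a]), GSt a] :: ('v,'a,'r) fa"
  have fF: "finite (supp (?F a))" for a by (rule fin_mono)
  have fs: "finite (supp (fa_sum ?F (labout G A)))"
  proof (rule finite_subset[OF supp_sum])
    show "finite (\<Union>a\<in>labout G A. supp (?F a))" using finL fF by blast
  qed
  have "killed G (fa_sub (mono 1 [GP A]) (fa_sum ?F (labout G A)))"
    unfolding killed_def
  proof (intro conjI allI impI)
    show "finite (supp (fa_sub (mono 1 [GP A]) (fa_sum ?F (labout G A))))"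
    proof (rule finite_subset[OF supp_sub])
      show "finite (supp (mono 1 [GP A] :: ('v,'a,'r) fa) \<union> supp (fa_sum ?F (labout G A)))"
        using fs fin_mono by blast
    qed
    fix x y assume g: "good G x"
    have "ev G x y (fa_sub (mono 1 [GP A]) (fa_sum ?F (labout G A))) =
       of_bool (A \<in> stF x 0 \<and> x = y) - (\<Sum>a\<in>labout G A. of_bool (lt 0 (stL x) \<and> stW x 0 = a \<and> A \<in> stF x 0 \<and> x = y))"
    proof -
      have "ev G x y (fa_sub (mono 1 [GP A]) (fa_sum ?F (labout G A))) =
          ev G x y (mono 1 [GP A] :: ('v,'a,'r) fa) - ev G x y (fa_sum ?F (labout G A))"
        by (rule ev_sub[OF fin_mono fs])
      also have "ev G x y (fa_sum ?F (labout G A)) = (\<Sum>a\<in>labout G A. ev G x y (?F a))"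
        by (rule ev_sum[OF finL fF])
      also have "\<dots> = (\<Sum>a\<in>labout G A. of_bool (lt 0 (stL x) \<and> stW x 0 = a \<and> A \<in> stF x 0 \<and> x = y))"
        by (rule sum.cong[OF refl]) (simp only: ev_mono T_ck[OF g A(2)], auto)
      also have "ev G x y (mono 1 [GP A] :: ('v,'a,'r) fa) = of_bool (A \<in> stF x 0 \<and> x = y)"
        by (simp add: ev_mono)
      finally show ?thesis .
    qed
    also have "(\<Sum>a\<in>labout G A. of_bool (lt 0 (stL x) \<and> stW x 0 = a \<and> A \<in> stF x 0 \<and> x = y) :: 'r) =
       (\<Sum>a\<in>labout G A. if stW x 0 = a then of_bool (lt 0 (stL x) \<and> A \<in> stF x 0 \<and> x = y) else 0)"
      by (rule sum.cong) auto
    also have "\<dots> = (if stW x 0 \<in> labout G A then of_bool (lt 0 (stL x) \<and> A \<in> stF x 0 \<and> x = y) else 0)"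
      using finL by simp
    also have "of_bool (A \<in> stF x 0 \<and> x = y) - \<dots> = (0::'r)"
    proof (cases "A \<in> stF x 0")
      case False then show ?thesis by simp
    next
      case True
      have pf: "pfilt G (stF x 0)" using gF0[OF g] .
      have Ane: "A \<noteq> {}" using True pf unfolding pfilt_def by auto
      then have reg: "regular G A" using A(1) unfolding Breg_def by simp
      have g1: "\<And>n. le n (stL x) \<Longrightarrow> pfilt G (stF x n)"
        and g3: "\<And>m. stL x = Fin m \<Longrightarrow> (\<forall>A\<in>stF x m. \<not> regular G A)"
        using g unfolding good_def by auto
      have l: "lt 0 (stL x)"
      proof (cases "stL x")
        case (Fin m)
        have "m \<noteq> 0"
        proof
          assume "m = 0"
          then have "\<forall>B\<in>stF x 0. \<not> regular G B" using g3 Fin by simp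
          then show False using True reg by simp
        qed
        then show ?thesis using Fin by simp
      qed simp
      have r1: "rset G A [stW x 0] \<in> stF x (Suc 0)" using good_lt0(1)[OF g l] True by auto
      have "le (Suc 0) (stL x)" using l by (cases "stL x") auto
      then have p1: "pfilt G (stF x (Suc 0))" using g1 by simp
      have "rset G A [stW x 0] \<noteq> {}" using r1 p1 unfolding pfilt_def by auto
      moreover have "stW x 0 \<in> alphabet G" by (rule alph_of_F[OF p1 r1])
      ultimately have "stW x 0 \<in> alphabet G \<and> rset G A [stW x 0] \<noteq> {}" by simp
      then have "stW x 0 \<in> labout G A" unfolding labout_def by simp
      then show ?thesis using True l by simp
    qed
    finally show "ev G x y (fa_sub (mono 1 [GP A]) (fa_sum ?F (labout G A))) = 0" .
  qed
  moreover have "fa_sum (\<lambda>a. fa_mult (fa_mult (sa a) (pA (rset G A [a]))) (sast a)) (labout G A) = fa_sum ?F (labout G A)"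
    by (simp add: sa_def sast_def pA_def mono_mult)
  ultimately show ?thesis by (simp add: pA_def)
qed

lemma rels_killed: "\<rho> \<in> rels G \<Longrightarrow> killed G \<rho>"
  unfolding rels_def
  apply (elim UnE)
  apply (elim CollectE exE conjE; simp add: rel_int)
  apply (elim CollectE exE conjE; simp add: rel_un)
  apply (elim CollectE exE conjE; simp add: rel_empty)
  apply (elim CollectE exE conjE; simp add: rel_ps)
  apply (elim CollectE exE conjE; simp add: rel_sp)
  apply (elim CollectE exE conjE; simp add: rel_ss)
  apply (elim CollectE exE conjE; simp add: rel_ss0)
  apply (elim CollectE exE conjE; simp add: rel_sss)
  apply (elim CollectE exE conjE; simp add: rel_sss2)
  apply (elim CollectE exE conjE; simp add: rel_ck)
  done

lemma lideal_killed: "f \<in> lideal G \<Longrightarrow> killed G f"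
proof (induction rule: lideal.induct)
  case (base x) then show ?case by (rule rels_killed)
next
  case zero then show ?case unfolding killed_def ev_def supp_def fa_zero_def by simp
next
  case (add x y) then show ?case unfolding killed_def
    using supp_add[of x y] finite_subset by (auto simp: ev_add)
next
  case (mult x c u v) then show ?case using killed_sandwich by blast
qed

end


lemma T_GS_exists:
  assumes N: "normal_lspace G" and g: "good G z" and aw: "\<alpha> \<in> words G" and ne: "\<alpha> \<noteq> []"
    and r: "rw G \<alpha> \<in> stF z 0"
  shows "\<exists>y. T G (map GS \<alpha>) z = Some y \<and> good G y \<and> stF y 0 = {B \<in> accs G. rset G B \<alpha> \<in> stF z 0}"
  using aw ne r
proof (induction \<alpha>)
  case Nil then show ?case by simp
next
  case (Cons a \<alpha>')
  interpret NL G by (rule NL.intro[OF N])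
  have pz: "pfilt G (stF z 0)" using good_F0[OF g] .
  show ?case
  proof (cases "\<alpha>' = []")
    case True
    then have "rw G [a] \<in> stF z 0" using Cons by simp
    then have "gop G (GS a) z = Some (St (lsuc (stL z)) (shcons a (stW z)) (shcons {A \<in> accs G. rset G A [a] \<in> stF z 0} (stF z)))"
      by simp
    moreover then have "good G (St (lsuc (stL z)) (shcons a (stW z)) (shcons {A \<in> accs G. rset G A [a] \<in> stF z 0} (stF z)))"
      using good_gop[OF g] by blast
    ultimately show ?thesis using True by simp
  next
    case False
    have w': "\<alpha>' \<in> words G" "a \<in> alphabet G" using words_Cons[OF Cons.prems(1) False] by auto
    have aw1: "[a] \<in> words G" using single_words[OF w'(2)] .
    have "rw G (a # \<alpha>') \<subseteq> rw G \<alpha>'" using rw_Cons_sub[OF False] .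
    moreover have "rw G \<alpha>' \<in> accs G" using rw_accs[OF w'(1) False] .
    ultimately have "rw G \<alpha>' \<in> stF z 0" using pfilt_up[OF pz Cons.prems(3)] by simp
    then obtain y' where y': "T G (map GS \<alpha>') z = Some y'" "good G y'"
      "stF y' 0 = {B \<in> accs G. rset G B \<alpha>' \<in> stF z 0}"
      using Cons.IH[OF w'(1) False] by blast
    have ra: "rw G [a] \<in> accs G" using rw_accs[OF aw1] by simp
    have cmp: "rset G (rset G B [a]) \<alpha>' = rset G B (a # \<alpha>')" for B by (rule rset_Cons[OF False, symmetric])
    have "rw G [a] \<in> stF y' 0" using y'(3) ra Cons.prems(3) cmp[of "verts G"] unfolding rw_def by simp
    then have s: "gop G (GS a) y' = Some (St (lsuc (stL y')) (shcons a (stW y')) (shcons {A \<in> accs G. rset G A [a] \<in> stF y' 0} (stF y')))"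
      by simp
    have gy: "good G (St (lsuc (stL y')) (shcons a (stW y')) (shcons {A \<in> accs G. rset G A [a] \<in> stF y' 0} (stF y')))"
      using good_gop[OF y'(2) s] .
    have "{A \<in> accs G. rset G A [a] \<in> stF y' 0} = {B \<in> accs G. rset G B (a # \<alpha>') \<in> stF z 0}"
      using y'(3) rset_accs[OF _ aw1] cmp by auto
    then show ?thesis using y'(1) s gy by simp
  qed
qed

lemma T_back: "T G (map GS \<beta>) z = Some x \<Longrightarrow> T G (rev (map GSt \<beta>)) x = Some z"
proof (induction \<beta> arbitrary: x)
  case Nil then show ?case by simp
next
  case (Cons b \<beta>)
  from Cons.prems obtain x1 where x1: "T G (map GS \<beta>) z = Some x1" "gop G (GS b) x1 = Some x"
    by (cases "T G (map GS \<beta>) z") auto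
  have "gop G (GSt b) x = Some x1" using GS_GSt[OF x1(2)] .
  moreover have "T G (rev (map GSt \<beta>)) x1 = Some z" using Cons.IH[OF x1(1)] .
  ultimately show ?case by (simp add: T_append)
qed

theorem lemma4p5:
  fixes G :: "('v, 'e, 'a) lspace"
  assumes "normal_lspace G"
  shows "(\<forall>A \<in> accs G. A \<noteq> {} \<longrightarrow> \<not> zero_in_L G (pA A :: ('v, 'a, 'r::comm_ring_1) fa))
    \<and> (\<forall>(r::'r) A. A \<in> accs G \<longrightarrow> zero_in_L G (fa_smult r (pA A)) \<longrightarrow> r = 0 \<or> A = {})
    \<and> (\<forall>(n::nat) (As :: nat \<Rightarrow> 'v set) (rs :: nat \<Rightarrow> 'r).
          (\<forall>i<n. As i \<in> accs G \<and> As i \<noteq> {}) \<longrightarrow>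
          (\<forall>i<n. \<forall>j<n. i \<noteq> j \<longrightarrow> As i \<inter> As j = {}) \<longrightarrow>
          zero_in_L G (fa_sum (\<lambda>i. fa_smult (rs i) (pA (As i))) {..<n}) \<longrightarrow>
          (\<forall>i<n. rs i = 0))
    \<and> (\<forall>\<alpha> \<beta> A (r::'r). \<alpha> \<in> words G \<longrightarrow> \<beta> \<in> words G \<longrightarrow> A \<in> accs G \<longrightarrow>
          A \<inter> rw G \<alpha> \<inter> rw G \<beta> \<noteq> {} \<longrightarrow> r \<noteq> 0 \<longrightarrow>
          \<not> zero_in_L G (fa_smult r (fa_mult (fa_mult (sw \<alpha>) (pA A)) (swst \<beta>))))"
proof -
  interpret NL G by (rule NL.intro[OF assms])
  have kz: "killed G f" if "zero_in_L G f" for f :: "('v,'a,'r) fa"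
    using lideal_killed that unfolding zero_in_L_def by blast
  have evz: "ev G x y f = 0" if "zero_in_L G f" "good G x" for f :: "('v,'a,'r) fa" and x y
    using kz[OF that(1)] that(2) unfolding killed_def by blast
  have ev_p: "ev G x x (mono c [GP A] :: ('v,'a,'r) fa) = c" if "A \<in> stF x 0" for x c A
    using that by (simp add: ev_mono)
  have P1: "\<forall>A \<in> accs G. A \<noteq> {} \<longrightarrow> \<not> zero_in_L G (pA A :: ('v, 'a, 'r) fa)"
  proof (intro ballI impI notI)
    fix A assume A: "A \<in> accs G" "A \<noteq> {}" and z: "zero_in_L G (pA A :: ('v, 'a, 'r) fa)"
    obtain x where x: "good G x" "A \<in> stF x 0" using exists_good[OF A] by blast
    have "ev G x x (pA A :: ('v, 'a, 'r) fa) = 1" unfolding pA_def using ev_p[OF x(2)] .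
    then show False using evz[OF z x(1)] by simp
  qed
  have P2: "\<forall>(r::'r) A. A \<in> accs G \<longrightarrow> zero_in_L G (fa_smult r (pA A)) \<longrightarrow> r = 0 \<or> A = {}"
  proof (intro allI impI)
    fix r :: 'r and A assume A: "A \<in> accs G" and z: "zero_in_L G (fa_smult r (pA A))"
    show "r = 0 \<or> A = {}"
    proof (cases "A = {}")
      case False
      obtain x where x: "good G x" "A \<in> stF x 0" using exists_good[OF A False] by blast
      have "ev G x x (fa_smult r (pA A) :: ('v, 'a, 'r) fa) = r"
        unfolding pA_def smult_mono using ev_p[OF x(2)] by simp
      then show ?thesis using evz[OF z x(1)] by simp
    qed simp
  qed
  have P3: "\<forall>(n::nat) (As :: nat \<Rightarrow> 'v set) (rs :: nat \<Rightarrow> 'r).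
          (\<forall>i<n. As i \<in> accs G \<and> As i \<noteq> {}) \<longrightarrow>
          (\<forall>i<n. \<forall>j<n. i \<noteq> j \<longrightarrow> As i \<inter> As j = {}) \<longrightarrow>
          zero_in_L G (fa_sum (\<lambda>i. fa_smult (rs i) (pA (As i))) {..<n}) \<longrightarrow>
          (\<forall>i<n. rs i = 0)"
  proof (intro allI impI)
    fix n :: nat and As :: "nat \<Rightarrow> 'v set" and rs :: "nat \<Rightarrow> 'r" and i
    assume ne: "\<forall>i<n. As i \<in> accs G \<and> As i \<noteq> {}"
      and dj: "\<forall>i<n. \<forall>j<n. i \<noteq> j \<longrightarrow> As i \<inter> As j = {}"
      and z: "zero_in_L G (fa_sum (\<lambda>i. fa_smult (rs i) (pA (As i))) {..<n})"
      and i: "i < n"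
    obtain x where x: "good G x" "As i \<in> stF x 0" using exists_good ne i by blast
    have pf: "pfilt G (stF x 0)" using good_F0[OF x(1)] .
    have eqf: "(\<lambda>i. fa_smult (rs i) (pA (As i))) = (\<lambda>i. mono (rs i) [GP (As i)] :: ('v,'a,'r) fa)"
      unfolding pA_def smult_mono by simp
    have "ev G x x (fa_sum (\<lambda>i. fa_smult (rs i) (pA (As i))) {..<n}) =
          (\<Sum>j\<in>{..<n}. ev G x x (mono (rs j) [GP (As j)] :: ('v,'a,'r) fa))"
      unfolding eqf by (rule ev_sum) (simp_all add: fin_mono)
    also have "\<dots> = (\<Sum>j\<in>{..<n}. if j = i then rs i else 0)"
    proof (rule sum.cong[OF refl])
      fix j assume j: "j \<in> {..<n}"
      show "ev G x x (mono (rs j) [GP (As j)] :: ('v,'a,'r) fa) = (if j = i then rs i else 0)"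
      proof (cases "j = i")
        case True then show ?thesis using ev_p[OF x(2)] by simp
      next
        case False
        have "As j \<inter> As i = {}" using dj j i False by auto
        moreover have "As j \<in> accs G" using ne j by auto
        moreover have "As i \<in> accs G" using ne i by auto
        ultimately have "As j \<notin> stF x 0" using pf x(2) unfolding pfilt_def by (metis)
        then show ?thesis using False by (simp add: ev_mono)
      qed
    qed
    also have "\<dots> = rs i" using i by simp
    finally show "rs i = 0" using evz[OF z x(1)] by simp
  qed
  have P4: "\<forall>\<alpha> \<beta> A (r::'r). \<alpha> \<in> words G \<longrightarrow> \<beta> \<in> words G \<longrightarrow> A \<in> accs G \<longrightarrow>
          A \<inter> rw G \<alpha> \<inter> rw G \<beta> \<noteq> {} \<longrightarrow> r \<noteq> 0 \<longrightarrow>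
          \<not> zero_in_L G (fa_smult r (fa_mult (fa_mult (sw \<alpha>) (pA A)) (swst \<beta>)))"
  proof (intro allI impI notI)
    fix \<alpha> \<beta> A and r :: 'r
    assume aw: "\<alpha> \<in> words G" and bw: "\<beta> \<in> words G" and A: "A \<in> accs G"
      and ne: "A \<inter> rw G \<alpha> \<inter> rw G \<beta> \<noteq> {}" and r: "r \<noteq> 0"
      and z: "zero_in_L G (fa_smult r (fa_mult (fa_mult (sw \<alpha>) (pA A)) (swst \<beta>)))"
    have Av: "A \<subseteq> verts G" using accs_sub[OF A] .
    have racc: "X \<noteq> [] \<Longrightarrow> X \<in> words G \<Longrightarrow> rw G X \<in> accs G" for X using rw_accs by blast
    have rnil: "rw G [] = verts G" unfolding rw_def by simp
    define C where "C = A \<inter> rw G \<alpha> \<inter> rw G \<beta>"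
    have Ar: "A \<inter> rw G X \<in> accs G" if "X \<in> words G" for X
    proof (cases "X = []")
      case True then show ?thesis using A Av by (simp add: rnil Int_absorb2)
    next
      case False then show ?thesis using accs_Int[OF A racc[OF False that]] by simp
    qed
    have "C = (A \<inter> rw G \<alpha>) \<inter> (A \<inter> rw G \<beta>)" unfolding C_def by auto
    then have Cacc: "C \<in> accs G" using accs_Int[OF Ar[OF aw] Ar[OF bw]] by simp
    obtain z0 where z0: "good G z0" "C \<in> stF z0 0" using exists_good[OF Cacc] ne unfolding C_def by blast
    have pz: "pfilt G (stF z0 0)" using good_F0[OF z0(1)] .
    have Az: "A \<in> stF z0 0" using pfilt_up[OF pz z0(2) A] unfolding C_def by auto
    have up: "\<gamma> \<noteq> [] \<Longrightarrow> \<gamma> \<in> words G \<Longrightarrow> rw G \<gamma> \<supseteq> C \<Longrightarrow> rw G \<gamma> \<in> stF z0 0" for \<gamma>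
      using pfilt_up[OF pz z0(2)] racc by blast
    obtain y where y: "T G (map GS \<alpha>) z0 = Some y"
    proof (cases "\<alpha> = []")
      case True then show ?thesis using that by simp
    next
      case False
      have "rw G \<alpha> \<in> stF z0 0" using up[OF False aw] unfolding C_def by auto
      then show ?thesis using T_GS_exists[OF assms z0(1) aw False] that by blast
    qed
    obtain x where x: "T G (map GS \<beta>) z0 = Some x" "good G x"
    proof (cases "\<beta> = []")
      case True then show ?thesis using that z0(1) by simp
    next
      case False
      have "rw G \<beta> \<in> stF z0 0" using up[OF False bw] unfolding C_def by auto
      then show ?thesis using T_GS_exists[OF assms z0(1) bw False] that by blast
    qed
    have xb: "T G (rev (map GSt \<beta>)) x = Some z0" using T_back[OF x(1)] .
    have word: "fa_smult r (fa_mult (fa_mult (sw \<alpha>) (pA A)) (swst \<beta>)) =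
        (mono r (map GS \<alpha> @ [GP A] @ rev (map GSt \<beta>)) :: ('v,'a,'r) fa)"
      unfolding sw_def pA_def swst_def by (simp add: mono_mult smult_mono)
    have "T G (map GS \<alpha> @ [GP A] @ rev (map GSt \<beta>)) x = Some y"
      using xb Az y by (simp add: T_append)
    then have "ev G x y (fa_smult r (fa_mult (fa_mult (sw \<alpha>) (pA A)) (swst \<beta>)) :: ('v,'a,'r) fa) = r"
      unfolding word by (simp add: ev_mono)
    then show False using evz[OF z x(2)] r by simp
  qed
  show ?thesis using P1 P2 P3 P4 by blast
qed


end
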